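(* Let $n\geq3$ and $\lambda=(\lambda_1,\dots,\lambda_n)\in\mathbb{R}^n$ with $\lambda_1+\dots+\lambda_n>0$ and $N(\lambda)=n$. Then for every integer $k\geq1$, \[\sum_{P\in\mathcal{P}^k_{ord}(\lambda)}(-1)^{|P|}\varepsilon(P)\varepsilon'(P)=0.\]
   Context: $s_J(\lambda)=\sum_{i\in J}\lambda_i$. $\delta(\lambda)$ is the minimum of $s_J(\lambda)/|J|$ over subsets $J$ with $s_J(\lambda)>0$; when $\delta(\lambda)>0$, $N(\lambda)$ is the minimum of $|J|$ over subsets $J$ with $s_J(\lambda)/|J|=\delta(\lambda)$. Ordered partitions $P=(I_1,\dots,I_r)$ of $\{1,\dots,n\}$ into nonempty blocks, $|P|=r$. $\mathcal{P}_{ord}(\lambda)$: those with $s_{I_1}(\lambda)+\dots+s_{I_i}(\lambda)>0$ for all $i$. $\mathcal{P}^k_{ord}(\lambda)$: those in $\mathcal{P}_{ord}(\lambda)$ having exactly $2k$ or $2k+1$ blocks of odd cardinality. $\varepsilon(P)=\mathrm{sgn}(\sigma_P)$, where $\sigma_P$ is the unique permutation with $\sigma_P^{-1}$ mapping $\{n_1+\dots+n_i+1,\dots,n_1+\dots+n_{i+1}\}$ increasingly onto $I_{i+1}$ ($n_i=|I_i|$); $\varepsilon'(P)=(-1)^{\frac12\sum_i|I_i|(|I_i|-1)}$. *)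

theory Defs
  imports Complex_Main "HOL-Combinatorics.Permutations"
begin

(* lambda = (lam 1, ..., lam n); values of lam outside {1..n} are irrelevant. *)

definition sJ :: "(nat \<Rightarrow> real) \<Rightarrow> nat set \<Rightarrow> real" where
  "sJ lam J = (\<Sum>i\<in>J. lam i)"

definition delta :: "nat \<Rightarrow> (nat \<Rightarrow> real) \<Rightarrow> real" where
  "delta n lam = Min {sJ lam J / real (card J) | J. J \<subseteq> {1..n} \<and> sJ lam J > 0}"

definition Nlam :: "nat \<Rightarrow> (nat \<Rightarrow> real) \<Rightarrow> nat" where
  "Nlam n lam = Min {card J | J. J \<subseteq> {1..n} \<and> sJ lam J / real (card J) = delta n lam}"

definition ord_partitions :: "nat \<Rightarrow> nat set list set" where
  "ord_partitions n = {P. (\<forall>I\<in>set P. I \<noteq> {}) \<and>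
      (\<forall>i<length P. \<forall>j<length P. i \<noteq> j \<longrightarrow> P ! i \<inter> P ! j = {}) \<and>
      \<Union>(set P) = {1..n}}"

definition Pord :: "nat \<Rightarrow> (nat \<Rightarrow> real) \<Rightarrow> nat set list set" where
  "Pord n lam = {P \<in> ord_partitions n.
      \<forall>i\<in>{1..length P}. sum_list (map (sJ lam) (take i P)) > 0}"

definition odd_blocks :: "nat set list \<Rightarrow> nat" where
  "odd_blocks P = length (filter (\<lambda>I. odd (card I)) P)"

definition Pord_k :: "nat \<Rightarrow> (nat \<Rightarrow> real) \<Rightarrow> nat \<Rightarrow> nat set list set" where
  "Pord_k n lam k = {P \<in> Pord n lam. odd_blocks P = 2*k \<or> odd_blocks P = 2*k+1}"

definition sigma_inv :: "nat set list \<Rightarrow> nat \<Rightarrow> nat" where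
  "sigma_inv P = (\<lambda>j. let xs = concat (map sorted_list_of_set P) in
      if 1 \<le> j \<and> j \<le> length xs then xs ! (j - 1) else j)"

definition sigma :: "nat set list \<Rightarrow> nat \<Rightarrow> nat" where
  "sigma P = inv (sigma_inv P)"

definition eps :: "nat set list \<Rightarrow> int" where
  "eps P = sign (sigma P)"

definition eps' :: "nat set list \<Rightarrow> int" where
  "eps' P = (-1) ^ ((\<Sum>I\<leftarrow>P. card I * (card I - 1)) div 2)"

end

theory Submission
  imports Defs "HOL-Library.Multiset" "HOL-Library.Product_Lexorder"
    "HOL-Computational_Algebra.Polynomial"
begin


definition dlist :: "nat set list \<Rightarrow> bool" where
  "dlist P \<longleftrightarrow> (\<forall>i<length P. \<forall>j<length P. i \<noteq> j \<longrightarrow> P ! i \<inter> P ! j = {})"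

lemma dlist_Nil[simp]: "dlist []"
  by (simp add: dlist_def)

lemma dlist_Cons: "dlist (A # P) \<longleftrightarrow> A \<inter> \<Union>(set P) = {} \<and> dlist P"
proof
  assume d: "dlist (A # P)"
  have "A \<inter> P ! j = {}" if "j < length P" for j
    using d that unfolding dlist_def by (metis Suc_less_eq length_Cons nat.simps(3) nth_Cons_0 nth_Cons_Suc zero_less_Suc)
  hence "A \<inter> \<Union>(set P) = {}" by (auto simp: in_set_conv_nth disjoint_iff)
  moreover have "dlist P" unfolding dlist_def
  proof (intro allI impI)
    fix i j assume "i < length P" "j < length P" "i \<noteq> j"
    thus "P ! i \<inter> P ! j = {}" using d unfolding dlist_def
      by (metis Suc_less_eq length_Cons nth_Cons_Suc old.nat.inject)
  qed
  ultimately show "A \<inter> \<Union>(set P) = {} \<and> dlist P" by blast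
next
  assume h: "A \<inter> \<Union>(set P) = {} \<and> dlist P"
  show "dlist (A # P)" unfolding dlist_def
  proof (intro allI impI)
    fix i j assume ij: "i < length (A # P)" "j < length (A # P)" "i \<noteq> j"
    show "(A # P) ! i \<inter> (A # P) ! j = {}"
    proof (cases i)
      case 0
      then obtain j' where "j = Suc j'" "j' < length P" using ij by (cases j) auto
      thus ?thesis using h 0 nth_mem by fastforce
    next
      case (Suc i')
      show ?thesis
      proof (cases j)
        case 0
        thus ?thesis using h Suc ij nth_mem by fastforce
      next
        case (Suc j')
        thus ?thesis using h \<open>i = Suc i'\<close> ij unfolding dlist_def by auto
      qed
    qed
  qed
qed

lemma dlist_append: "dlist (xs @ ys) \<longleftrightarrow> dlist xs \<and> dlist ys \<and> \<Union>(set xs) \<inter> \<Union>(set ys) = {}"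
  by (induction xs) (auto simp: dlist_Cons)

lemma dlist_distinct: "dlist xs \<Longrightarrow> \<forall>A\<in>set xs. A \<noteq> {} \<Longrightarrow> distinct xs"
  by (induction xs) (auto simp: dlist_Cons)

lemma dlist_take: "dlist xs \<Longrightarrow> dlist (take u xs)"
  by (metis append_take_drop_id dlist_append)
lemma dlist_drop: "dlist xs \<Longrightarrow> dlist (drop u xs)"
  by (metis append_take_drop_id dlist_append)

lemma card_Union_dlist: "dlist xs \<Longrightarrow> \<forall>A\<in>set xs. finite A \<Longrightarrow>
    card (\<Union>(set xs)) = sum_list (map card xs)"
  by (induction xs) (auto simp: dlist_Cons card_Un_disjoint)

lemma sJ_Union_dlist: "dlist xs \<Longrightarrow> \<forall>A\<in>set xs. finite A \<Longrightarrow>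
    sJ lam (\<Union>(set xs)) = sum_list (map (sJ lam) xs)"
  by (induction xs) (auto simp: dlist_Cons sJ_def sum.union_disjoint)

lemma length_le_card_dlist: "dlist xs \<Longrightarrow> \<forall>A\<in>set xs. finite A \<and> A \<noteq> {} \<Longrightarrow>
    length xs \<le> card (\<Union>(set xs))"
proof (induction xs)
  case (Cons A xs)
  hence "card A \<ge> 1" by (simp add: Suc_leI card_gt_0_iff)
  thus ?case using Cons by (auto simp: dlist_Cons card_Un_disjoint)
qed simp

definition cnt :: "nat set \<Rightarrow> nat set \<Rightarrow> nat" where
  "cnt A B = (\<Sum>a\<in>A. card {b\<in>B. b < a})"

definition iota :: "nat set \<Rightarrow> nat set \<Rightarrow> int" where
  "iota A B = (-1) ^ cnt A B"

lemma cnt_Un1: "finite A \<Longrightarrow> finite B \<Longrightarrow> A \<inter> B = {} \<Longrightarrow> cnt (A \<union> B) C = cnt A C + cnt B C"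
  by (simp add: cnt_def sum.union_disjoint)

lemma cnt_Un2: "finite B \<Longrightarrow> finite C \<Longrightarrow> B \<inter> C = {} \<Longrightarrow> cnt A (B \<union> C) = cnt A B + cnt A C"
proof -
  assume f: "finite B" "finite C" and d: "B \<inter> C = {}"
  have "card {b\<in>B \<union> C. b < a} = card {b\<in>B. b < a} + card {b\<in>C. b < a}" for a
  proof -
    have "{b\<in>B \<union> C. b < a} = {b\<in>B. b < a} \<union> {b\<in>C. b < a}" by auto
    thus ?thesis using f d by (simp add: card_Un_disjoint disjoint_iff)
  qed
  thus ?thesis by (simp add: cnt_def sum.distrib)
qed

lemma iota_Un1: "finite A \<Longrightarrow> finite B \<Longrightarrow> A \<inter> B = {} \<Longrightarrow> iota (A \<union> B) C = iota A C * iota B C"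
  by (simp add: iota_def cnt_Un1 power_add)
lemma iota_Un2: "finite B \<Longrightarrow> finite C \<Longrightarrow> B \<inter> C = {} \<Longrightarrow> iota A (B \<union> C) = iota A B * iota A C"
  by (simp add: iota_def cnt_Un2 power_add)

lemma iota_empty1[simp]: "iota {} B = 1" by (simp add: iota_def cnt_def)
lemma iota_empty2[simp]: "iota A {} = 1" by (simp add: iota_def cnt_def)

lemma cnt_swap: assumes "finite A" "finite B" "A \<inter> B = {}"
  shows "cnt A B + cnt B A = card A * card B"
proof -
  have s: "(\<Sum>b\<in>B. card {a\<in>A. a < b}) = (\<Sum>a\<in>A. card {b\<in>B. a < b})"
  proof -
    have "(\<Sum>b\<in>B. card {a\<in>A. a < b}) = (\<Sum>b\<in>B. \<Sum>a\<in>A. if a < b then 1 else 0)"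
      using assms by (simp add: sum.If_cases Int_def)
    also have "\<dots> = (\<Sum>a\<in>A. \<Sum>b\<in>B. if a < b then 1 else 0)" by (rule sum.swap)
    also have "\<dots> = (\<Sum>a\<in>A. card {b\<in>B. a < b})"
      using assms by (simp add: sum.If_cases Int_def)
    finally show ?thesis .
  qed
  have "card {b\<in>B. b < a} + card {b\<in>B. a < b} = card B" if "a \<in> A" for a
  proof -
    have "B = {b\<in>B. b < a} \<union> {b\<in>B. a < b}" using assms that by auto
    hence "card B = card ({b\<in>B. b < a} \<union> {b\<in>B. a < b})" by simp
    also have "\<dots> = card {b\<in>B. b < a} + card {b\<in>B. a < b}"
      using assms by (intro card_Un_disjoint) auto
    finally show ?thesis by simp
  qed
  hence "cnt A B + (\<Sum>a\<in>A. card {b\<in>B. a < b}) = card A * card B"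
    by (simp add: cnt_def sum.distrib[symmetric])
  thus ?thesis using s by (simp add: cnt_def)
qed

lemma iota_swap: "finite A \<Longrightarrow> finite B \<Longrightarrow> A \<inter> B = {} \<Longrightarrow>
   iota A B * iota B A = (-1) ^ (card A * card B)"
  by (simp add: iota_def cnt_swap power_add[symmetric])

lemma iota_sq[simp]: "iota A B * iota A B = 1"
  by (simp add: iota_def power_add[symmetric] flip: power2_eq_square power_mult)

lemma iota_comm: assumes "finite A" "finite B" "A \<inter> B = {}" "even (card A * card B)"
  shows "iota B A = iota A B"
proof -
  have "iota A B * iota B A = 1" using iota_swap[OF assms(1-3)] assms(4) by simp
  hence "iota A B * (iota A B * iota B A) = iota A B" by simp
  thus ?thesis by (simp add: mult.assoc[symmetric])
qed

fun epsl :: "nat set list \<Rightarrow> int" where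
  "epsl [] = 1"
| "epsl (A # P) = iota A (\<Union>(set P)) * epsl P"

lemma epsl_append: "dlist (xs @ ys) \<Longrightarrow> \<forall>A\<in>set (xs @ ys). finite A \<Longrightarrow>
   epsl (xs @ ys) = epsl xs * epsl ys * iota (\<Union>(set xs)) (\<Union>(set ys))"
proof (induction xs)
  case (Cons A xs)
  have fin: "finite (\<Union>(set xs))" "finite (\<Union>(set ys))" "finite A" using Cons.prems by auto
  have d: "A \<inter> \<Union>(set xs) = {}" "A \<inter> \<Union>(set ys) = {}" "\<Union>(set xs) \<inter> \<Union>(set ys) = {}"
    using Cons.prems(1) by (auto simp: dlist_Cons dlist_append)
  have "epsl ((A # xs) @ ys) = iota A (\<Union>(set xs) \<union> \<Union>(set ys)) * epsl (xs @ ys)" by simp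
  also have "\<dots> = iota A (\<Union>(set xs)) * iota A (\<Union>(set ys)) * (epsl xs * epsl ys * iota (\<Union>(set xs)) (\<Union>(set ys)))"
    using Cons fin d by (simp add: iota_Un2 dlist_Cons)
  also have "\<dots> = epsl (A # xs) * epsl ys * iota (\<Union>(set (A # xs))) (\<Union>(set ys))"
    using fin d by (simp add: iota_Un1)
  finally show ?case .
qed simp

lemma epsl_single[simp]: "epsl [A] = 1" by simp


lemma set_dlist_disj: "dlist xs \<Longrightarrow> A \<in> set xs \<Longrightarrow> B \<in> set xs \<Longrightarrow> A \<noteq> B \<Longrightarrow> A \<inter> B = {}"
  unfolding dlist_def by (metis in_set_conv_nth)

lemma dlist_iff_distinct: "distinct xs \<Longrightarrow> dlist xs \<longleftrightarrow> (\<forall>A\<in>set xs. \<forall>B\<in>set xs. A \<noteq> B \<longrightarrow> A \<inter> B = {})"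
  unfolding dlist_def by (metis distinct_conv_nth nth_mem in_set_conv_nth)

lemma epsl_move_front:
  assumes "dlist (ys1 @ x # ys2)" "\<forall>A\<in>set (ys1 @ x # ys2). finite A"
    and "even (card x * card (\<Union>(set ys1)))"
  shows "epsl (ys1 @ x # ys2) = epsl (x # ys1 @ ys2)"
proof -
  have d: "dlist ys1" "dlist ys2" "x \<inter> \<Union>(set ys2) = {}" "\<Union>(set ys1) \<inter> (x \<union> \<Union>(set ys2)) = {}"
    using assms(1) by (auto simp: dlist_append dlist_Cons)
  have f: "finite x" "finite (\<Union>(set ys1))" "finite (\<Union>(set ys2))" using assms(2) by auto
  have "epsl (ys1 @ x # ys2) = epsl ys1 * epsl (x # ys2) * iota (\<Union>(set ys1)) (x \<union> \<Union>(set ys2))"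
    using epsl_append[OF assms(1,2)] by simp
  also have "\<dots> = epsl ys1 * (iota x (\<Union>(set ys2)) * epsl ys2) * (iota (\<Union>(set ys1)) x * iota (\<Union>(set ys1)) (\<Union>(set ys2)))"
    using d f by (simp add: iota_Un2)
  also have "iota (\<Union>(set ys1)) x = iota x (\<Union>(set ys1))"
    using iota_comm[of x "\<Union>(set ys1)"] d f assms(3) by auto
  also have "epsl ys1 * (iota x (\<Union>(set ys2)) * epsl ys2) * (iota x (\<Union>(set ys1)) * iota (\<Union>(set ys1)) (\<Union>(set ys2)))
     = iota x (\<Union>(set ys1) \<union> \<Union>(set ys2)) * (epsl ys1 * epsl ys2 * iota (\<Union>(set ys1)) (\<Union>(set ys2)))"
    using d f by (simp add: iota_Un2 Int_Un_distrib)
  also have "epsl ys1 * epsl ys2 * iota (\<Union>(set ys1)) (\<Union>(set ys2)) = epsl (ys1 @ ys2)"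
  proof -
    have "\<Union>(set ys1) \<inter> \<Union>(set ys2) = {}" using d(4) by blast
    thus ?thesis using epsl_append[of ys1 ys2] assms(1,2) d by (auto simp: dlist_append)
  qed
  finally show ?thesis by simp
qed

lemma even_card_Union: "dlist xs \<Longrightarrow> \<forall>A\<in>set xs. finite A \<and> even (card A) \<Longrightarrow> even (card (\<Union>(set xs)))"
  by (induction xs) (auto simp: dlist_Cons card_Un_disjoint)

lemma perm_eps:
  assumes "distinct xs" "distinct ys" "set xs = set ys" "dlist xs" "\<forall>A\<in>set xs. finite A"
    and "filter (\<lambda>A. odd (card A)) xs = filter (\<lambda>A. odd (card A)) ys"
  shows "epsl xs = epsl ys"
  using assms
proof (induction xs arbitrary: ys)
  case Nil thus ?case by simp
next
  case (Cons x xs)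
  have "x \<in> set ys" using Cons.prems(3) by auto
  then obtain ys1 ys2 where ys: "ys = ys1 @ x # ys2" by (meson split_list)
  have dys: "dlist ys" using Cons.prems dlist_iff_distinct by metis
  have fin: "\<forall>A\<in>set ys. finite A" using Cons.prems by auto
  have xn: "x \<notin> set ys1" "x \<notin> set ys2" using Cons.prems(2) ys by auto
  have f1: "filter (\<lambda>A. odd (card A)) ys1 = []" if True: "odd (card x)"
  proof (rule ccontr)
    assume "filter (\<lambda>A. odd (card A)) ys1 \<noteq> []"
    then obtain y r where yr: "filter (\<lambda>A. odd (card A)) ys1 = y # r" by (cases "filter (\<lambda>A. odd (card A)) ys1") auto
    hence "y \<in> set ys1" by (metis filter_is_subset list.set_intros(1) subsetD)
    have "filter (\<lambda>A. odd (card A)) ys = y # r @ filter (\<lambda>A. odd (card A)) (x # ys2)"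
      using ys yr by simp
    moreover have "filter (\<lambda>A. odd (card A)) (x # xs) = x # filter (\<lambda>A. odd (card A)) xs" using True by simp
    ultimately have "y = x" using Cons.prems(6) by simp
    thus False using \<open>y \<in> set ys1\<close> xn by simp
  qed
  have ev: "even (card x * card (\<Union>(set ys1)))"
  proof (cases "odd (card x)")
    case True
    hence "\<forall>A\<in>set ys1. even (card A)" using f1 by (metis (mono_tags, lifting) filter_empty_conv)
    moreover have "dlist ys1" using dys ys by (simp add: dlist_append)
    ultimately have "even (card (\<Union>(set ys1)))" using even_card_Union fin ys by auto
    thus ?thesis by simp
  qed simp
  have sxs: "set xs = set (ys1 @ ys2)" using Cons.prems(1,2,3) ys by auto
  have e1: "epsl ys = epsl (x # ys1 @ ys2)"
    using epsl_move_front[of ys1 x ys2] dys fin ys ev by simp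
  have IH: "epsl xs = epsl (ys1 @ ys2)"
  proof (rule Cons.IH)
    show "distinct xs" using Cons.prems by simp
    show "distinct (ys1 @ ys2)" using Cons.prems(2) ys by simp
    show "set xs = set (ys1 @ ys2)" by (rule sxs)
    show "dlist xs" using Cons.prems(4) by (simp add: dlist_Cons)
    show "\<forall>A\<in>set xs. finite A" using Cons.prems(3,5) by auto
    show "filter (\<lambda>A. odd (card A)) xs = filter (\<lambda>A. odd (card A)) (ys1 @ ys2)"
    proof (cases "odd (card x)")
      case True
      have "filter (\<lambda>A. odd (card A)) ys1 = []" using f1 True by blast
      thus ?thesis using Cons.prems(6) ys True by simp
    next
      case False
      thus ?thesis using Cons.prems(6) ys by simp
    qed
  qed
  have un: "\<Union>(set (ys1 @ ys2)) = \<Union>(set xs)"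
    using Cons.prems(1,2,3) ys using sxs by simp
  show ?case using e1 IH un by simp
qed


definition perm_of :: "nat list \<Rightarrow> nat \<Rightarrow> nat" where
  "perm_of xs = (\<lambda>j. if 1 \<le> j \<and> j \<le> length xs then xs ! (j - 1) else j)"

fun invc :: "nat list \<Rightarrow> nat" where
  "invc [] = 0"
| "invc (x # xs) = length (filter (\<lambda>y. y < x) xs) + invc xs"

definition crs :: "nat list \<Rightarrow> nat list \<Rightarrow> nat" where
  "crs xs ys = (\<Sum>x\<leftarrow>xs. length (filter (\<lambda>y. y < x) ys))"

lemma invc_append: "invc (xs @ ys) = invc xs + invc ys + crs xs ys"
  by (induction xs) (auto simp: crs_def)

lemma perm_of_permutes:
  assumes "distinct xs" "set xs = {1..length xs}"
  shows "perm_of xs permutes {1..length xs}"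
proof (rule bij_imp_permutes)
  have b1: "bij_betw (\<lambda>j. j - 1) {1..length xs} {..<length xs}"
    by (rule bij_betw_byWitness[where f'="\<lambda>j. j + 1"]) auto
  have b2: "bij_betw ((!) xs) {..<length xs} {1..length xs}"
    using bij_betw_nth[OF assms(1)] assms(2) by simp
  have "bij_betw ((!) xs \<circ> (\<lambda>j. j - 1)) {1..length xs} {1..length xs}"
    by (rule bij_betw_trans[OF b1 b2])
  thus "bij_betw (perm_of xs) {1..length xs} {1..length xs}"
    by (rule bij_betw_cong[THEN iffD1, rotated]) (auto simp: perm_of_def)
next
  show "\<And>x. x \<notin> {1..length xs} \<Longrightarrow> perm_of xs x = x" by (auto simp: perm_of_def)
qed

lemma perm_of_permutation: "distinct xs \<Longrightarrow> set xs = {1..length xs} \<Longrightarrow> permutation (perm_of xs)"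
  using perm_of_permutes permutes_imp_permutation by blast

lemma perm_of_swap:
  "perm_of (ys @ b # a # zs) = perm_of (ys @ a # b # zs) \<circ> Transposition.transpose (length ys + 1) (length ys + 2)"
proof (rule ext)
  fix j
  show "perm_of (ys @ b # a # zs) j = (perm_of (ys @ a # b # zs) \<circ> Transposition.transpose (length ys + 1) (length ys + 2)) j"
  proof (cases "j = length ys + 1 \<or> j = length ys + 2")
    case True thus ?thesis by (auto simp: perm_of_def nth_append)
  next
    case False
    hence t: "Transposition.transpose (length ys + 1) (length ys + 2) j = j" by (auto simp: transpose_def)
    have "(ys @ b # a # zs) ! (j - 1) = (ys @ a # b # zs) ! (j - 1)" if "j \<ge> 1"
    proof (cases "j - 1 < length ys")
      case True thus ?thesis by (simp add: nth_append)
    next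
      case False
      hence "j - 1 - length ys \<ge> 2" using \<open>\<not> (j = length ys + 1 \<or> j = length ys + 2)\<close> that by auto
      then obtain k where "j - 1 - length ys = Suc (Suc k)" by (metis add_2_eq_Suc le_Suc_ex)
      thus ?thesis using False by (simp add: nth_append)
    qed
    thus ?thesis using t by (auto simp: perm_of_def)
  qed
qed

lemma sign_perm_of_aux:
  "\<forall>xs. length xs = m \<longrightarrow> distinct xs \<longrightarrow> set xs = {1..m} \<longrightarrow> sign (perm_of xs) = (-1) ^ invc xs"
proof (induction m)
  case 0
  have "perm_of [] = id" by (auto simp: perm_of_def)
  thus ?case by simp
next
  case (Suc m)
  have inner: "\<And>ys. length (ys @ Suc m # zs) = Suc m \<Longrightarrow> distinct (ys @ Suc m # zs) \<Longrightarrow>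
      set (ys @ Suc m # zs) = {1..Suc m} \<Longrightarrow>
      sign (perm_of (ys @ Suc m # zs)) = (-1) ^ invc (ys @ Suc m # zs)" for zs
  proof (induction zs)
    case Nil
    have p: "perm_of (ys @ [Suc m]) = perm_of ys"
    proof (rule ext)
      fix j show "perm_of (ys @ [Suc m]) j = perm_of ys j"
        using Nil.prems(1) by (auto simp: perm_of_def nth_append)
    qed
    have sy: "set ys = {1..m}"
    proof -
      have e: "insert (Suc m) (set ys) = {1..Suc m}" using Nil.prems(3) by simp
      have nm: "Suc m \<notin> set ys" using Nil.prems(2) by simp
      have "set ys = {1..Suc m} - {Suc m}" using e nm by blast
      also have "\<dots> = {1..m}" by auto
      finally show ?thesis .
    qed
    have "crs ys [Suc m] = 0"
    proof -
      have "\<forall>y\<in>set ys. \<not> Suc m < y" using sy by auto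
      thus ?thesis unfolding crs_def by (induction ys) auto
    qed
    hence "invc (ys @ [Suc m]) = invc ys" by (simp add: invc_append)
    thus ?case using Suc.IH Nil.prems sy p by simp
  next
    case (Cons z zs)
    have z1: "z \<in> {1..Suc m}" using Cons.prems(3) by auto
    have z2: "z \<noteq> Suc m" using Cons.prems(2) by auto
    have zl: "z < Suc m" using z1 z2 by auto
    have p: "perm_of (ys @ Suc m # z # zs) = perm_of (ys @ z # Suc m # zs) \<circ> Transposition.transpose (length ys + 1) (length ys + 2)"
      by (rule perm_of_swap)
    have dd: "distinct (ys @ z # Suc m # zs)" using Cons.prems(2) by auto
    have ss: "set (ys @ z # Suc m # zs) = {1..length (ys @ z # Suc m # zs)}" using Cons.prems by auto
    have IH: "sign (perm_of ((ys @ [z]) @ Suc m # zs)) = (-1) ^ invc ((ys @ [z]) @ Suc m # zs)"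
      using Cons.IH[of "ys @ [z]"] Cons.prems by auto
    have sg: "sign (perm_of (ys @ Suc m # z # zs)) = - sign (perm_of (ys @ z # Suc m # zs))"
      using p sign_compose[OF perm_of_permutation[OF dd ss] permutation_swap_id] by (simp add: sign_swap_id)
    have iv: "invc (ys @ Suc m # z # zs) = invc (ys @ z # Suc m # zs) + 1"
    proof -
      have "crs ys (Suc m # z # zs) = crs ys (z # Suc m # zs)" unfolding crs_def
        by (induction ys) auto
      thus ?thesis using zl by (simp add: invc_append)
    qed
    show ?case using sg iv IH by simp
  qed
  show ?case
  proof (intro allI impI)
    fix xs :: "nat list" assume h: "length xs = Suc m" "distinct xs" "set xs = {1..Suc m}"
    moreover have "Suc m \<in> set xs" using h(3) by simp
    ultimately obtain ys zs where "xs = ys @ Suc m # zs" by (meson split_list)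
    thus "sign (perm_of xs) = (-1) ^ invc xs" using inner h by simp
  qed
qed

lemma sign_perm_of: "distinct xs \<Longrightarrow> set xs = {1..length xs} \<Longrightarrow> sign (perm_of xs) = (-1) ^ invc xs"
  using sign_perm_of_aux by blast


lemma invc_sorted: "sorted xs \<Longrightarrow> invc xs = 0"
  by (induction xs) (auto simp: filter_empty_conv)

lemma crs_cnt: "distinct xs \<Longrightarrow> distinct ys \<Longrightarrow> crs xs ys = cnt (set xs) (set ys)"
proof -
  assume d: "distinct xs" "distinct ys"
  have "crs xs ys = (\<Sum>x\<in>set xs. length (filter (\<lambda>y. y < x) ys))"
    unfolding crs_def using d by (simp add: sum_list_distinct_conv_sum_set)
  also have "\<dots> = (\<Sum>x\<in>set xs. card {y\<in>set ys. y < x})"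
    using d by (intro sum.cong) (auto simp: distinct_length_filter Int_def conj_commute)
  finally show ?thesis by (simp add: cnt_def)
qed

lemma concat_sorted_props:
  assumes "dlist P" "\<forall>A\<in>set P. finite A"
  shows "distinct (concat (map sorted_list_of_set P))"
    and "set (concat (map sorted_list_of_set P)) = \<Union>(set P)"
    and "(-1) ^ invc (concat (map sorted_list_of_set P)) = epsl P"
  using assms
proof (induction P)
  case (Cons A P)
  { case 1 thus ?case using Cons by (auto simp: dlist_Cons) }
  { case 2 thus ?case using Cons by auto }
  { case 3
    have d: "distinct (concat (map sorted_list_of_set P))" "set (concat (map sorted_list_of_set P)) = \<Union>(set P)"
      using Cons 3 by (auto simp: dlist_Cons)
    have "invc (concat (map sorted_list_of_set (A # P))) =
       invc (sorted_list_of_set A) + invc (concat (map sorted_list_of_set P)) + crs (sorted_list_of_set A) (concat (map sorted_list_of_set P))"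
      by (simp add: invc_append)
    also have "crs (sorted_list_of_set A) (concat (map sorted_list_of_set P)) = cnt A (\<Union>(set P))"
      using crs_cnt[of "sorted_list_of_set A"] d 3 by simp
    finally show ?case using Cons 3 by (simp add: invc_sorted power_add iota_def dlist_Cons)
  }
qed auto

lemma eps_epsl:
  assumes "P \<in> ord_partitions n"
  shows "eps P = epsl P"
proof -
  let ?xs = "concat (map sorted_list_of_set P)"
  have dl: "dlist P" using assms by (simp add: ord_partitions_def dlist_def)
  have un: "\<Union>(set P) = {1..n}" using assms by (simp add: ord_partitions_def)
  have fin: "\<forall>A\<in>set P. finite A" using un by (metis Sup_upper finite_atLeastAtMost finite_subset)
  have d: "distinct ?xs" and s: "set ?xs = {1..n}" and e: "(-1) ^ invc ?xs = epsl P"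
    using concat_sorted_props[OF dl fin] un by auto
  have l: "length ?xs = n" using distinct_card[OF d] s by simp
  have si: "sigma_inv P = perm_of ?xs" by (simp add: sigma_inv_def perm_of_def Let_def)
  have pm: "permutation (perm_of ?xs)" using perm_of_permutation[OF d] s l by simp
  have "eps P = sign (perm_of ?xs)" by (simp add: eps_def sigma_def si sign_inverse[OF pm])
  also have "\<dots> = (-1) ^ invc ?xs" using sign_perm_of[OF d] s l by simp
  finally show ?thesis using e by simp
qed


definition tt :: "int poly" where "tt = [:0, 1:]"
definition cK :: "nat \<Rightarrow> int poly" where "cK k = (-1) ^ (k * (k - 1) div 2)"
definition aK :: "nat \<Rightarrow> int poly" where "aK k = cK k * (if odd k then tt else 1)"

lemma cK_Suc: "cK (Suc k) = cK k * (-1) ^ k"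
proof -
  have "Suc k * (Suc k - 1) = k * (k - 1) + 2 * k" by (cases k) auto
  hence "Suc k * (Suc k - 1) div 2 = k * (k - 1) div 2 + k" by simp
  thus ?thesis by (simp add: cK_def power_add)
qed

lemma aK_rec: "aK (Suc (p + q)) = tt * (-1) ^ q * aK (p + q) + aK (p + q - 1) *
   (of_int (if odd p then 1 else 0) * (-1 - tt^2) + of_int (if odd q then 1 else 0) * (-1 + tt^2))"
proof (cases "p + q")
  case 0
  hence "p = 0" "q = 0" by auto
  thus ?thesis by (simp add: aK_def cK_def)
next
  case (Suc j)
  have c1: "cK (Suc j) = cK j * (-1) ^ j" by (rule cK_Suc)
  have c2: "cK (Suc (Suc j)) = - cK j" by (simp add: cK_Suc power_add[symmetric] mult.assoc)
  have pq: "Suc (p + q) = Suc (Suc j)" "p + q - 1 = j" using Suc by auto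
  show ?thesis
  proof (cases "odd p"; cases "odd q")
    assume "odd p" "odd q"
    hence "odd j" using Suc by presburger
    thus ?thesis using `odd p` `odd q` Suc pq c1 c2 by (simp add: aK_def algebra_simps neg_one_odd_power neg_one_even_power)
  next
    assume "odd p" "\<not> odd q"
    hence "even j" using Suc by presburger
    thus ?thesis using `odd p` `\<not> odd q` Suc pq c1 c2 by (simp add: aK_def algebra_simps power2_eq_square neg_one_odd_power neg_one_even_power)
  next
    assume "\<not> odd p" "odd q"
    hence "even j" using Suc by presburger
    thus ?thesis using `\<not> odd p` `odd q` Suc pq c1 c2 by (simp add: aK_def algebra_simps power2_eq_square neg_one_odd_power neg_one_even_power)
  next
    assume "\<not> odd p" "\<not> odd q"
    hence "odd j" using Suc by presburger
    thus ?thesis using `\<not> odd p` `\<not> odd q` Suc pq c1 c2 by (simp add: aK_def algebra_simps neg_one_odd_power neg_one_even_power)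
  qed
qed

lemma sum_alt: "finite (K::nat set) \<Longrightarrow> (\<Sum>z\<in>K. (-1::int) ^ card {a\<in>K. z < a}) = (if odd (card K) then 1 else 0)"
proof (induction "card K" arbitrary: K)
  case 0 thus ?case by simp
next
  case (Suc k)
  hence ne: "K \<noteq> {}" by auto
  let ?m = "Min K"
  have mK: "?m \<in> K" using Suc.prems ne by simp
  let ?K' = "K - {?m}"
  have ck: "card ?K' = k" using Suc.hyps(2) mK Suc.prems by simp
  have e1: "{a\<in>K. z < a} = {a\<in>?K'. z < a}" if "z \<in> ?K'" for z
  proof -
    have "?m \<le> z" using that Suc.prems by simp
    thus ?thesis by auto
  qed
  have e2: "{a\<in>K. ?m < a} = ?K'"
  proof
    show "{a\<in>K. ?m < a} \<subseteq> ?K'" by auto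
    show "?K' \<subseteq> {a\<in>K. ?m < a}"
    proof
      fix a assume a: "a \<in> ?K'"
      hence "?m \<le> a" using Suc.prems by simp
      thus "a \<in> {a\<in>K. ?m < a}" using a by auto
    qed
  qed
  have "(\<Sum>z\<in>K. (-1::int) ^ card {a\<in>K. z < a}) = (-1) ^ card {a\<in>K. ?m < a} + (\<Sum>z\<in>?K'. (-1::int) ^ card {a\<in>K. z < a})"
    using Suc.prems mK by (simp add: sum.remove)
  also have "(\<Sum>z\<in>?K'. (-1::int) ^ card {a\<in>K. z < a}) = (\<Sum>z\<in>?K'. (-1::int) ^ card {a\<in>?K'. z < a})"
    using e1 by (intro sum.cong) auto
  also have "\<dots> = (if odd k then 1 else 0)" using Suc.hyps(1)[of ?K'] ck Suc.prems(1) by (metis finite_Diff)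
  finally have fin: "(\<Sum>z\<in>K. (-1::int) ^ card {a\<in>K. z < a}) = (-1) ^ card {a\<in>K. ?m < a} + (if odd k then 1 else 0)" .
  have c1: "card {a\<in>K. ?m < a} = k" using e2 ck by simp
  have c2: "card K = Suc k" using Suc.hyps(2) by simp
  show ?case unfolding fin c1 c2 by (cases "even k") (simp_all add: neg_one_even_power neg_one_odd_power)
qed


definition atom :: "nat set \<Rightarrow> bool" where "atom A \<longleftrightarrow> finite A \<and> (card A = 1 \<or> card A = 2)"
definition AL :: "nat set \<Rightarrow> nat set list set" where
  "AL S = {s. (\<forall>A\<in>set s. atom A) \<and> dlist s \<and> \<Union>(set s) = S}"
definition SAP :: "(nat set \<Rightarrow> 'k::linorder) \<Rightarrow> nat set \<Rightarrow> nat set list set" where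
  "SAP key S = {s \<in> AL S. sorted_wrt (\<lambda>A B. key A < key B) s}"
definition kap :: "(nat \<Rightarrow> nat) \<Rightarrow> nat set \<Rightarrow> int poly" where
  "kap r A = (if r (Min A) < r (Max A) then -1 - tt^2 else -1 + tt^2)"
definition wt :: "(nat \<Rightarrow> nat) \<Rightarrow> nat set \<Rightarrow> int poly" where
  "wt r A = (if card A = 1 then tt else kap r A)"
definition wtl :: "(nat \<Rightarrow> nat) \<Rightarrow> nat set list \<Rightarrow> int poly" where
  "wtl r s = prod_list (map (wt r) s)"
definition keyD :: "(nat \<Rightarrow> nat) \<Rightarrow> nat \<Rightarrow> nat set \<Rightarrow> nat \<times> nat" where
  "keyD r M A = (Max (r ` A), if card A = 1 then M else Min (r ` A))"

lemma atom_ne: "atom A \<Longrightarrow> A \<noteq> {}" by (auto simp: atom_def)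
lemma atom_fin: "atom A \<Longrightarrow> finite A" by (auto simp: atom_def)

lemma wtl_append[simp]: "wtl r (xs @ ys) = wtl r xs * wtl r ys" by (simp add: wtl_def)
lemma wtl_Nil[simp]: "wtl r [] = 1" by (simp add: wtl_def)
lemma wtl_Cons[simp]: "wtl r (A # xs) = wt r A * wtl r xs" by (simp add: wtl_def)

lemma finite_AL: "finite S \<Longrightarrow> finite (AL S)"
proof -
  assume f: "finite S"
  have "AL S \<subseteq> {s. set s \<subseteq> Pow S \<and> length s \<le> card S}"
  proof
    fix s assume "s \<in> AL S"
    hence s: "\<forall>A\<in>set s. atom A" "dlist s" "\<Union>(set s) = S" by (auto simp: AL_def)
    have "length s \<le> card (\<Union>(set s))"
      using length_le_card_dlist[OF s(2)] s(1) atom_ne atom_fin by blast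
    thus "s \<in> {s. set s \<subseteq> Pow S \<and> length s \<le> card S}" using s(3) by auto
  qed
  moreover have "finite {s. set s \<subseteq> Pow S \<and> length s \<le> card S}"
    using f by (intro finite_lists_length_le) auto
  ultimately show ?thesis by (rule finite_subset)
qed

lemma finite_SAP: "finite S \<Longrightarrow> finite (SAP key S)"
  using finite_AL unfolding SAP_def by auto

lemma AL_empty: "AL {} = {[]}"
proof
  show "AL {} \<subseteq> {[]}"
  proof
    fix s assume s: "s \<in> AL {}"
    have a: "\<forall>A\<in>set s. atom A" "\<Union>(set s) = {}" using s by (auto simp: AL_def)
    have "set s = {}"
    proof (rule ccontr)
      assume "set s \<noteq> {}"
      then obtain A where A: "A \<in> set s" by (meson all_not_in_conv)
      hence "A \<noteq> {}" "A \<subseteq> {}" using a atom_ne by auto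
      thus False by blast
    qed
    thus "s \<in> {[]}" by simp
  qed
  show "{[]} \<subseteq> AL {}" by (simp add: AL_def)
qed

lemma SAP_empty: "SAP key {} = {[]}"
  by (auto simp: SAP_def AL_empty)

lemma sum_ind: "finite A \<Longrightarrow> (\<Sum>a\<in>A. if P a then 1 else 0::nat) = card {a\<in>A. P a}"
  by (simp add: sum.If_cases Int_def)

lemma cnt_single: "finite A \<Longrightarrow> cnt A {x} = card {a\<in>A. x < a}"
proof -
  assume f: "finite A"
  have "card {b\<in>{x}. b < a} = (if x < a then 1 else 0)" for a
  proof -
    have e: "{b\<in>{x}. b < a} = (if x < a then {x} else {})" by auto
    show ?thesis unfolding e by simp
  qed
  hence "cnt A {x} = (\<Sum>a\<in>A. if x < a then 1 else 0)"
    unfolding cnt_def by simp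
  thus ?thesis using sum_ind[OF f] by simp
qed

lemma cnt_pair: "finite A \<Longrightarrow> z \<noteq> x \<Longrightarrow> cnt A {z, x} = card {a\<in>A. z < a} + card {a\<in>A. x < a}"
proof -
  assume f: "finite A" and zx: "z \<noteq> x"
  have "card {b\<in>{z, x}. b < a} = (if z < a then 1 else 0) + (if x < a then 1 else 0)" for a
  proof -
    have e: "{b\<in>{z,x}. b < a} = (if z < a then {z} else {}) \<union> (if x < a then {x} else {})" by auto
    show ?thesis unfolding e using zx by (cases "z < a"; cases "x < a") auto
  qed
  hence "cnt A {z, x} = (\<Sum>a\<in>A. (if z < a then 1 else 0) + (if x < a then 1 else 0))"
    unfolding cnt_def by simp
  thus ?thesis using sum_ind[OF f] by (simp add: sum.distrib)
qed

lemma comb_id: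
  assumes f: "finite J" and xJ: "x \<notin> J" and rJ: "\<forall>z\<in>J. r z < r x"
  shows "tt * of_int (iota J {x}) * aK (card J) +
    (\<Sum>z\<in>J. kap r {z, x} * of_int (iota (J - {z}) {z, x}) * aK (card J - 1)) = aK (Suc (card J))"
proof -
  define Lo where "Lo = {a\<in>J. a < x}"
  define Hi where "Hi = {a\<in>J. x < a}"
  have fLH: "finite Lo" "finite Hi" using f by (auto simp: Lo_def Hi_def)
  have nx: "\<forall>a\<in>J. a \<noteq> x" using xJ by auto
  have JLH: "J = Lo \<union> Hi" "Lo \<inter> Hi = {}" using nx by (auto simp: Lo_def Hi_def linorder_neq_iff)
  have cJ: "card J = card Lo + card Hi" using JLH fLH by (simp add: card_Un_disjoint)
  have i1: "iota J {x} = (-1) ^ card Hi" using cnt_single[OF f] by (simp add: iota_def Hi_def)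
  have kLo: "kap r {z, x} = -1 - tt^2" if "z \<in> Lo" for z
  proof -
    have "z < x" "r z < r x" using that rJ by (auto simp: Lo_def)
    thus ?thesis by (simp add: kap_def)
  qed
  have kHi: "kap r {z, x} = -1 + tt^2" if "z \<in> Hi" for z
  proof -
    have "x < z" "r z < r x" using that rJ by (auto simp: Hi_def)
    thus ?thesis by (simp add: kap_def)
  qed
  have iLo: "iota (J - {z}) {z, x} = (-1) ^ card {a\<in>Lo. z < a}" if "z \<in> Lo" for z
  proof -
    have zx: "z < x" "z \<in> J" using that by (auto simp: Lo_def)
    have a1: "{a\<in>J - {z}. z < a} = {a\<in>Lo. z < a} \<union> Hi" using zx nx by (auto simp: Lo_def Hi_def linorder_neq_iff)
    have a2: "{a\<in>J - {z}. x < a} = Hi" using zx by (auto simp: Hi_def)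
    have "card {a\<in>J - {z}. z < a} = card {a\<in>Lo. z < a} + card Hi"
      unfolding a1 using fLH JLH by (intro card_Un_disjoint) auto
    hence "cnt (J - {z}) {z, x} = card {a\<in>Lo. z < a} + 2 * card Hi"
      using cnt_pair[of "J - {z}" z x] f zx a2 by simp
    thus ?thesis by (simp add: iota_def power_add power_mult)
  qed
  have iHi: "iota (J - {z}) {z, x} = (-1) ^ (card {a\<in>Hi. z < a} + (card Hi - 1))" if "z \<in> Hi" for z
  proof -
    have zx: "x < z" "z \<in> J" using that by (auto simp: Hi_def)
    have a1: "{a\<in>J - {z}. z < a} = {a\<in>Hi. z < a}" using zx by (auto simp: Hi_def)
    have a2: "{a\<in>J - {z}. x < a} = Hi - {z}" using zx by (auto simp: Hi_def)
    have "cnt (J - {z}) {z, x} = card {a\<in>Hi. z < a} + (card Hi - 1)"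
      using cnt_pair[of "J - {z}" z x] f zx a1 a2 that fLH by simp
    thus ?thesis by (simp add: iota_def)
  qed
  have sLo: "(\<Sum>z\<in>Lo. (-1::int) ^ card {a\<in>Lo. z < a}) = (if odd (card Lo) then 1 else 0)"
    by (rule sum_alt[OF fLH(1)])
  have sHi: "(\<Sum>z\<in>Hi. (-1::int) ^ (card {a\<in>Hi. z < a} + (card Hi - 1))) = (if odd (card Hi) then 1 else 0)"
  proof -
    have "(\<Sum>z\<in>Hi. (-1::int) ^ (card {a\<in>Hi. z < a} + (card Hi - 1))) =
        (-1) ^ (card Hi - 1) * (\<Sum>z\<in>Hi. (-1::int) ^ card {a\<in>Hi. z < a})"
      by (simp add: power_add sum_distrib_left mult.commute)
    also have "\<dots> = (if odd (card Hi) then 1 else 0)" using sum_alt[OF fLH(2)]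
      by (cases "odd (card Hi)") (auto simp: neg_one_even_power)
    finally show ?thesis .
  qed
  have "(\<Sum>z\<in>J. kap r {z, x} * of_int (iota (J - {z}) {z, x}) * aK (card J - 1)) =
     (\<Sum>z\<in>Lo. kap r {z, x} * of_int (iota (J - {z}) {z, x}) * aK (card J - 1)) +
     (\<Sum>z\<in>Hi. kap r {z, x} * of_int (iota (J - {z}) {z, x}) * aK (card J - 1))"
    unfolding JLH(1) using fLH JLH(2) by (rule sum.union_disjoint)
  also have "(\<Sum>z\<in>Lo. kap r {z, x} * of_int (iota (J - {z}) {z, x}) * aK (card J - 1)) =
     (\<Sum>z\<in>Lo. (-1 - tt^2) * of_int ((-1) ^ card {a\<in>Lo. z < a}) * aK (card J - 1))"
    using kLo iLo by (intro sum.cong) auto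
  also have "\<dots> = (-1 - tt^2) * aK (card J - 1) * of_int (\<Sum>z\<in>Lo. (-1) ^ card {a\<in>Lo. z < a})"
    by (simp add: sum_distrib_left of_int_sum mult_ac)
  also have "(\<Sum>z\<in>Hi. kap r {z, x} * of_int (iota (J - {z}) {z, x}) * aK (card J - 1)) =
     (\<Sum>z\<in>Hi. (-1 + tt^2) * of_int ((-1) ^ (card {a\<in>Hi. z < a} + (card Hi - 1))) * aK (card J - 1))"
    using kHi iHi by (intro sum.cong) auto
  also have "\<dots> = (-1 + tt^2) * aK (card J - 1) * of_int (\<Sum>z\<in>Hi. (-1) ^ (card {a\<in>Hi. z < a} + (card Hi - 1)))"
    by (simp add: sum_distrib_left of_int_sum mult_ac)
  finally have S0: "(\<Sum>z\<in>J. kap r {z, x} * of_int (iota (J - {z}) {z, x}) * aK (card J - 1)) =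
     (-1 - tt^2) * aK (card J - 1) * of_int (\<Sum>z\<in>Lo. (-1) ^ card {a\<in>Lo. z < a}) +
     (-1 + tt^2) * aK (card J - 1) * of_int (\<Sum>z\<in>Hi. (-1) ^ (card {a\<in>Hi. z < a} + (card Hi - 1)))" .
  have S1: "(\<Sum>z\<in>J. kap r {z, x} * of_int (iota (J - {z}) {z, x}) * aK (card J - 1)) =
     (-1 - tt^2) * aK (card J - 1) * of_int (if odd (card Lo) then 1 else 0) +
     (-1 + tt^2) * aK (card J - 1) * of_int (if odd (card Hi) then 1 else 0)"
    using S0 unfolding sLo sHi .
  have R: "aK (Suc (card J)) = tt * (-1) ^ card Hi * aK (card J) + aK (card J - 1) *
     (of_int (if odd (card Lo) then 1 else 0) * (-1 - tt^2) + of_int (if odd (card Hi) then 1 else 0) * (-1 + tt^2))"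
    using aK_rec[of "card Lo" "card Hi"] by (simp only: cJ)
  show ?thesis unfolding R S1 i1 by (simp add: algebra_simps)
qed


lemma Xat_eq: "x \<in> I \<Longrightarrow> {B. atom B \<and> x \<in> B \<and> B \<subseteq> I} = insert {x} ((\<lambda>z. {z, x}) ` (I - {x}))"
proof (intro set_eqI iffI)
  fix B assume xI: "x \<in> I" and B: "B \<in> {B. atom B \<and> x \<in> B \<and> B \<subseteq> I}"
  hence a: "finite B" "card B = 1 \<or> card B = 2" "x \<in> B" "B \<subseteq> I" by (auto simp: atom_def)
  show "B \<in> insert {x} ((\<lambda>z. {z, x}) ` (I - {x}))"
  proof (cases "card B = 1")
    case True
    then obtain b where "B = {b}" by (auto simp: card_Suc_eq)
    thus ?thesis using a by auto
  next
    case False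
    hence "card B = 2" using a by auto
    then obtain b c where bc: "B = {b, c}" "b \<noteq> c" by (auto simp: card_Suc_eq numeral_2_eq_2)
    show ?thesis
    proof (cases "b = x")
      case True
      hence "B = {c, x}" "c \<in> I - {x}" using bc a by auto
      thus ?thesis by blast
    next
      case False
      hence "c = x" using bc a by auto
      hence "B = {b, x}" "b \<in> I - {x}" using bc a by auto
      thus ?thesis by blast
    qed
  qed
next
  fix B assume xI: "x \<in> I" and B: "B \<in> insert {x} ((\<lambda>z. {z, x}) ` (I - {x}))"
  thus "B \<in> {B. atom B \<and> x \<in> B \<and> B \<subseteq> I}" by (auto simp: atom_def)
qed

lemma Max_lt_x:
  assumes inj: "inj_on r I" and mx: "\<forall>y\<in>I. r y \<le> r x" and xI: "x \<in> I"
    and C: "C \<subseteq> I" "finite C" "C \<noteq> {}" "x \<notin> C"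
  shows "Max (r ` C) < r x"
proof -
  have "Max (r ` C) \<in> r ` C" using C by simp
  then obtain c where c: "c \<in> C" "Max (r ` C) = r c" by auto
  have cI: "c \<in> I" using c C by auto
  have "c \<noteq> x" using c C by auto
  hence "r c \<noteq> r x" using inj cI xI by (auto simp: inj_on_def)
  moreover have "r c \<le> r x" using mx cI by auto
  ultimately show ?thesis using c by simp
qed

lemma Max_eq_x:
  assumes mx: "\<forall>y\<in>I. r y \<le> r x" and C: "C \<subseteq> I" "finite C" "x \<in> C"
  shows "Max (r ` C) = r x"
proof -
  have "r x \<in> r ` C" using C by auto
  hence "r x \<le> Max (r ` C)" using C by simp
  moreover have "Max (r ` C) \<le> r x" using C mx by (subst Max_le_iff) auto
  ultimately show ?thesis by simp
qed

lemma SAP_last: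
  fixes r :: "nat \<Rightarrow> nat"
  assumes inj: "inj_on r I" and xI: "x \<in> I" and mx: "\<forall>y\<in>I. r y \<le> r x" and fI: "finite I"
  shows "SAP (keyD r M) I = (\<lambda>(B,g). g @ [B]) ` (SIGMA B:{B. atom B \<and> x \<in> B \<and> B \<subseteq> I}. SAP (keyD r M) (I - B))"
proof (intro set_eqI iffI)
  fix g assume g: "g \<in> SAP (keyD r M) I"
  hence ga: "\<forall>A\<in>set g. atom A" "dlist g" "\<Union>(set g) = I" "sorted_wrt (\<lambda>A B. keyD r M A < keyD r M B) g"
    by (auto simp: SAP_def AL_def)
  have "g \<noteq> []" using ga(3) xI by auto
  define B where "B = last g"
  define g' where "g' = butlast g"
  have gg: "g = g' @ [B]" using \<open>g \<noteq> []\<close> by (simp add: B_def g'_def)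
  have dB: "dlist g'" "\<Union>(set g') \<inter> B = {}" using ga(2) unfolding gg by (auto simp: dlist_append dlist_Cons)
  have Bsub: "B \<subseteq> I" "atom B" using ga gg by auto
  have srt: "sorted_wrt (\<lambda>A B. keyD r M A < keyD r M B) g'" "\<forall>C\<in>set g'. keyD r M C < keyD r M B"
    using ga(4) unfolding gg by (auto simp: sorted_wrt_append)
  have xB: "x \<in> B"
  proof (rule ccontr)
    assume nx: "x \<notin> B"
    obtain C where C: "C \<in> set g" "x \<in> C" using ga(3) xI by auto
    have "C \<noteq> B" using C nx by auto
    hence Cg: "C \<in> set g'" using C gg by auto
    have "C \<subseteq> I" using Cg ga gg by auto
    have m1: "Max (r ` C) = r x" using Max_eq_x[OF mx \<open>C \<subseteq> I\<close>] C atom_fin ga(1) by auto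
    have m2: "Max (r ` B) < r x" using Max_lt_x[OF inj mx xI Bsub(1)] Bsub atom_fin atom_ne nx by auto
    have "keyD r M C < keyD r M B" using srt Cg by auto
    thus False using m1 m2 by (simp add: keyD_def)
  qed
  have "g' \<in> SAP (keyD r M) (I - B)"
    using ga srt dB gg by (auto simp: SAP_def AL_def)
  thus "g \<in> (\<lambda>(B,g). g @ [B]) ` (SIGMA B:{B. atom B \<and> x \<in> B \<and> B \<subseteq> I}. SAP (keyD r M) (I - B))"
    using xB Bsub gg by (auto intro!: image_eqI[of _ _ "(B, g')"])
next
  fix g assume "g \<in> (\<lambda>(B,g). g @ [B]) ` (SIGMA B:{B. atom B \<and> x \<in> B \<and> B \<subseteq> I}. SAP (keyD r M) (I - B))"
  then obtain B g' where gg: "g = g' @ [B]" and B: "atom B" "x \<in> B" "B \<subseteq> I"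
    and g': "g' \<in> SAP (keyD r M) (I - B)" by auto
  have ga: "\<forall>A\<in>set g'. atom A" "dlist g'" "\<Union>(set g') = I - B" "sorted_wrt (\<lambda>A B. keyD r M A < keyD r M B) g'"
    using g' by (auto simp: SAP_def AL_def)
  have lt: "keyD r M C < keyD r M B" if "C \<in> set g'" for C
  proof -
    have C: "C \<subseteq> I" "x \<notin> C" "finite C" "C \<noteq> {}" using that ga B atom_fin atom_ne by auto
    have "Max (r ` C) < r x" using Max_lt_x[OF inj mx xI C(1,3,4,2)] .
    moreover have "Max (r ` B) = r x" using Max_eq_x[OF mx B(3)] B atom_fin by auto
    ultimately show ?thesis by (simp add: keyD_def)
  qed
  have "dlist g" using ga B unfolding gg by (auto simp: dlist_append dlist_Cons)
  moreover have "\<Union>(set g) = I" using ga B gg by auto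
  moreover have "sorted_wrt (\<lambda>A B. keyD r M A < keyD r M B) g" using ga lt gg by (auto simp: sorted_wrt_append)
  ultimately show "g \<in> SAP (keyD r M) I" using ga B gg by (auto simp: SAP_def AL_def)
qed

lemma expand_D:
  assumes fU: "finite U" and inj: "inj_on r U"
  shows "I \<subseteq> U \<Longrightarrow> aK (card I) = (\<Sum>g\<in>SAP (keyD r M) I. wtl r g * of_int (epsl g))"
proof (induction "card I" arbitrary: I rule: less_induct)
  case less
  show ?case
  proof (cases "I = {}")
    case True thus ?thesis by (simp add: SAP_empty aK_def cK_def)
  next
    case False
    have fI: "finite I" using less.prems fU finite_subset by blast
    have injI: "inj_on r I" using inj less.prems inj_on_subset by blast
    have "Max (r ` I) \<in> r ` I" using fI False by simp
    then obtain x where xI: "x \<in> I" and xm: "r x = Max (r ` I)" by auto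
    have mx: "\<forall>y\<in>I. r y \<le> r x" using fI xm by auto
    let ?X = "{B. atom B \<and> x \<in> B \<and> B \<subseteq> I}"
    let ?F = "\<lambda>g. wtl r g * of_int (epsl g)"
    have fX: "finite ?X" by (rule finite_subset[of _ "Pow I"]) (auto simp: fI)
    have injA: "inj_on (\<lambda>(B,g). g @ [B]) (SIGMA B:?X. SAP (keyD r M) (I - B))"
      by (auto simp: inj_on_def)
    have "(\<Sum>g\<in>SAP (keyD r M) I. ?F g) = (\<Sum>(B,g)\<in>(SIGMA B:?X. SAP (keyD r M) (I - B)). ?F (g @ [B]))"
      unfolding SAP_last[OF injI xI mx fI] by (subst sum.reindex[OF injA]) (simp add: case_prod_unfold comp_def)
    also have "\<dots> = (\<Sum>B\<in>?X. \<Sum>g\<in>SAP (keyD r M) (I - B). ?F (g @ [B]))"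
      by (rule sum.Sigma[symmetric]) (auto simp: fX fI finite_SAP)
    also have "\<dots> = (\<Sum>B\<in>?X. wt r B * of_int (iota (I - B) B) * aK (card (I - B)))"
    proof (rule sum.cong[OF refl])
      fix B assume B: "B \<in> ?X"
      have ptw: "?F (g @ [B]) = wt r B * of_int (iota (I - B) B) * ?F g" if g: "g \<in> SAP (keyD r M) (I - B)" for g
      proof -
        have ga: "\<forall>A\<in>set g. atom A" "dlist g" "\<Union>(set g) = I - B" using g by (auto simp: SAP_def AL_def)
        have "dlist (g @ [B])" using ga by (auto simp: dlist_append dlist_Cons)
        moreover have "\<forall>A\<in>set (g @ [B]). finite A" using ga B atom_fin by auto
        ultimately have "epsl (g @ [B]) = epsl g * iota (I - B) B"
          using epsl_append[of g "[B]"] ga by simp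
        thus ?thesis by (simp add: mult_ac)
      qed
      have "(\<Sum>g\<in>SAP (keyD r M) (I - B). ?F (g @ [B])) = (\<Sum>g\<in>SAP (keyD r M) (I - B). wt r B * of_int (iota (I - B) B) * ?F g)"
        using ptw by (rule sum.cong[OF refl])
      also have "\<dots> = wt r B * of_int (iota (I - B) B) * (\<Sum>g\<in>SAP (keyD r M) (I - B). ?F g)"
        by (simp add: sum_distrib_left)
      also have "(\<Sum>g\<in>SAP (keyD r M) (I - B). ?F g) = aK (card (I - B))"
      proof -
        have "card (I - B) < card I" using B fI by (intro psubset_card_mono) auto
        moreover have "I - B \<subseteq> U" using less.prems by auto
        ultimately show ?thesis using less.hyps[of "I - B"] by simp
      qed
      finally show "(\<Sum>g\<in>SAP (keyD r M) (I - B). ?F (g @ [B])) = wt r B * of_int (iota (I - B) B) * aK (card (I - B))" .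
    qed
    also have "\<dots> = tt * of_int (iota (I - {x}) {x}) * aK (card (I - {x})) +
        (\<Sum>z\<in>I - {x}. kap r {z, x} * of_int (iota (I - {x} - {z}) {z, x}) * aK (card (I - {x}) - 1))"
    proof -
      have nin: "{x} \<notin> (\<lambda>z. {z, x}) ` (I - {x})" by auto
      have injp: "inj_on (\<lambda>z. {z, x}) (I - {x})" by (auto simp: inj_on_def doubleton_eq_iff)
      have "(\<Sum>B\<in>?X. wt r B * of_int (iota (I - B) B) * aK (card (I - B))) =
          wt r {x} * of_int (iota (I - {x}) {x}) * aK (card (I - {x})) +
          (\<Sum>B\<in>(\<lambda>z. {z, x}) ` (I - {x}). wt r B * of_int (iota (I - B) B) * aK (card (I - B)))"
        unfolding Xat_eq[OF xI] using fI nin by (simp add: sum.insert)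
      also have "(\<Sum>B\<in>(\<lambda>z. {z, x}) ` (I - {x}). wt r B * of_int (iota (I - B) B) * aK (card (I - B))) =
          (\<Sum>z\<in>I - {x}. wt r {z, x} * of_int (iota (I - {z, x}) {z, x}) * aK (card (I - {z, x})))"
        by (simp add: sum.reindex[OF injp])
      also have "\<dots> = (\<Sum>z\<in>I - {x}. kap r {z, x} * of_int (iota (I - {x} - {z}) {z, x}) * aK (card (I - {x}) - 1))"
      proof (rule sum.cong[OF refl])
        fix z assume z: "z \<in> I - {x}"
        have "card {z, x} = 2" using z by auto
        hence "wt r {z, x} = kap r {z, x}" by (simp add: wt_def)
        moreover have "I - {z, x} = I - {x} - {z}" by auto
        moreover have "card (I - {x} - {z}) = card (I - {x}) - 1" using z fI by simp
        ultimately show "wt r {z, x} * of_int (iota (I - {z, x}) {z, x}) * aK (card (I - {z, x})) =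
            kap r {z, x} * of_int (iota (I - {x} - {z}) {z, x}) * aK (card (I - {x}) - 1)" by simp
      qed
      finally show ?thesis by (simp add: wt_def)
    qed
    also have "\<dots> = aK (Suc (card (I - {x})))"
    proof (rule comb_id)
      show "finite (I - {x})" using fI by simp
      show "x \<notin> I - {x}" by simp
      show "\<forall>z\<in>I - {x}. r z < r x"
      proof
        fix z assume z: "z \<in> I - {x}"
        hence "r z \<noteq> r x" using injI xI by (metis DiffE inj_on_contraD singletonI)
        thus "r z < r x" using mx z by (simp add: order.not_eq_order_implies_strict)
      qed
    qed
    also have "Suc (card (I - {x})) = card I" by (rule card_Suc_Diff1[OF fI xI])
    finally show ?thesis by simp
  qed
qed


lemma AL_props: "g \<in> AL I \<Longrightarrow> distinct g \<and> set g \<subseteq> {A. atom A \<and> A \<subseteq> I} \<and> dlist g"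
  unfolding AL_def using dlist_distinct atom_ne by blast

lemma strict_sorted_key: "inj_on k (set l) \<Longrightarrow> distinct l \<Longrightarrow> sorted (map k l) \<Longrightarrow>
  sorted_wrt (\<lambda>A B. k A < k B) l"
proof -
  assume "inj_on k (set l)" "distinct l" "sorted (map k l)"
  hence "sorted_wrt (<) (map k l)" by (simp add: strict_sorted_iff distinct_map)
  thus ?thesis by (simp add: sorted_wrt_map)
qed

lemma sorted_of_strict: assumes "sorted_wrt (\<lambda>A B. k A < k B) l" shows "sorted (map k l)"
proof -
  have "sorted_wrt (\<lambda>x y. k x \<le> k y) l"
    using sorted_wrt_mono_rel[of l "\<lambda>A B. k A < k B" "\<lambda>x y. k x \<le> k y"] assms by auto
  thus ?thesis by (simp add: sorted_map)
qed

lemma sort_in_SAP: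
  assumes g: "g \<in> AL I" and inj: "inj_on k {A. atom A \<and> A \<subseteq> I}"
  shows "sort_key k g \<in> SAP k I"
proof -
  have p: "distinct g" "set g \<subseteq> {A. atom A \<and> A \<subseteq> I}" "dlist g" using AL_props[OF g] by auto
  have inj': "inj_on k (set g)" using inj p(2) inj_on_subset by blast
  have d: "distinct (sort_key k g)" using p by simp
  have "dlist (sort_key k g)" using p(3) dlist_iff_distinct[OF p(1)] dlist_iff_distinct[OF d] by simp
  moreover have "sorted_wrt (\<lambda>A B. k A < k B) (sort_key k g)"
    using strict_sorted_key[of k "sort_key k g"] inj' d by simp
  ultimately show ?thesis using g by (simp add: SAP_def AL_def)
qed

lemma sort_id:
  assumes g: "g \<in> SAP k I" and inj: "inj_on k {A. atom A \<and> A \<subseteq> I}"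
  shows "sort_key k g = g"
proof -
  have p: "set g \<subseteq> {A. atom A \<and> A \<subseteq> I}" using AL_props g by (auto simp: SAP_def)
  have s: "sorted (map k g)" using g sorted_of_strict by (auto simp: SAP_def)
  show ?thesis using sort_key_inj_key_eq[of g g k] inj_on_subset[OF inj p] s by simp
qed

lemma wtl_perm: "mset xs = mset ys \<Longrightarrow> wtl r xs = wtl r ys"
  unfolding wtl_def by (metis mset_map prod_mset_prod_list)

lemma SAP_key_change:
  fixes k1 :: "nat set \<Rightarrow> 'a::linorder" and k2 :: "nat set \<Rightarrow> 'b::linorder"
  assumes inj1: "inj_on k1 {A. atom A \<and> A \<subseteq> I}" and inj2: "inj_on k2 {A. atom A \<and> A \<subseteq> I}"
    and sing: "\<And>A B. atom A \<Longrightarrow> atom B \<Longrightarrow> A \<subseteq> I \<Longrightarrow> B \<subseteq> I \<Longrightarrow> card A = 1 \<Longrightarrow> card B = 1 \<Longrightarrow>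
       (k1 A < k1 B \<longleftrightarrow> k2 A < k2 B)"
  shows "(\<Sum>g\<in>SAP k1 I. wtl r g * of_int (epsl g)) = (\<Sum>g\<in>SAP k2 I. wtl r g * of_int (epsl g))"
proof (rule sum.reindex_bij_witness[where i="sort_key k1" and j="sort_key k2"])
  fix a assume a: "a \<in> SAP k1 I"
  have aAL: "a \<in> AL I" using a by (simp add: SAP_def)
  have p: "distinct a" "set a \<subseteq> {A. atom A \<and> A \<subseteq> I}" "dlist a" using AL_props[OF aAL] by auto
  show "sort_key k2 a \<in> SAP k2 I" by (rule sort_in_SAP[OF aAL inj2])
  have s1: "sorted (map k1 a)" using a sorted_of_strict by (auto simp: SAP_def)
  show "sort_key k1 (sort_key k2 a) = a"
    using sort_key_inj_key_eq[of "sort_key k2 a" a k1] inj_on_subset[OF inj1 p(2)] s1 by simp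
  show "wtl r (sort_key k2 a) * of_int (epsl (sort_key k2 a)) = wtl r a * of_int (epsl a)"
  proof -
    have w: "wtl r (sort_key k2 a) = wtl r a" by (rule wtl_perm) simp
    let ?P = "\<lambda>A. odd (card A)"
    let ?L = "filter ?P a"
    have sL: "set ?L \<subseteq> {A. atom A \<and> A \<subseteq> I \<and> card A = 1}" using p(2) by (auto simp: atom_def)
    have dL: "distinct ?L" using p(1) by simp
    have injL2: "inj_on k2 (set ?L)" using inj_on_subset[OF inj2] sL by blast
    have injL1: "inj_on k1 (set ?L)" using inj_on_subset[OF inj1] sL by blast
    have st2: "sorted_wrt (\<lambda>A B. k2 A < k2 B) (sort_key k2 ?L)"
      using strict_sorted_key[of k2 "sort_key k2 ?L"] injL2 dL by simp
    have mem: "\<And>A. A \<in> set ?L \<Longrightarrow> atom A \<and> A \<subseteq> I \<and> card A = 1" using sL by blast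
    have st1: "sorted_wrt (\<lambda>A B. k1 A < k1 B) (sort_key k2 ?L)"
    proof (rule sorted_wrt_mono_rel[OF _ st2])
      fix x y assume xy: "x \<in> set (sort_key k2 ?L)" "y \<in> set (sort_key k2 ?L)" "k2 x < k2 y"
      have mx: "atom x \<and> x \<subseteq> I \<and> card x = 1" using mem xy(1) by simp
      have my: "atom y \<and> y \<subseteq> I \<and> card y = 1" using mem xy(2) by simp
      show "k1 x < k1 y" using sing[of x y] mx my xy(3) by blast
    qed
    have e12: "sort_key k1 ?L = sort_key k2 ?L"
      using sort_key_inj_key_eq[of ?L "sort_key k2 ?L" k1] injL1 sorted_of_strict[OF st1] by simp
    have "filter ?P a = filter ?P (sort_key k1 a)" using sort_id[OF a inj1] by simp
    also have "\<dots> = sort_key k1 ?L" by (rule filter_sort)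
    also have "\<dots> = sort_key k2 ?L" by (rule e12)
    also have "\<dots> = filter ?P (sort_key k2 a)" by (rule filter_sort[symmetric])
    finally have fe: "filter ?P (sort_key k2 a) = filter ?P a" by simp
    have "epsl (sort_key k2 a) = epsl a"
    proof (rule perm_eps)
      show "distinct (sort_key k2 a)" using p by simp
      show "distinct a" by (rule p(1))
      show "set (sort_key k2 a) = set a" by simp
      show "dlist (sort_key k2 a)" using p dlist_iff_distinct[OF p(1)] dlist_iff_distinct[of "sort_key k2 a"] by simp
      show "\<forall>A\<in>set (sort_key k2 a). finite A" using p(2) atom_fin by auto
      show "filter ?P (sort_key k2 a) = filter ?P a" by (rule fe)
    qed
    thus ?thesis using w by simp
  qed
next
  fix b assume b: "b \<in> SAP k2 I"
  have bAL: "b \<in> AL I" using b by (simp add: SAP_def)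
  have p: "distinct b" "set b \<subseteq> {A. atom A \<and> A \<subseteq> I}" "dlist b" using AL_props[OF bAL] by auto
  show "sort_key k1 b \<in> SAP k1 I" by (rule sort_in_SAP[OF bAL inj1])
  have s2: "sorted (map k2 b)" using b sorted_of_strict by (auto simp: SAP_def)
  show "sort_key k2 (sort_key k1 b) = b"
    using sort_key_inj_key_eq[of "sort_key k1 b" b k2] inj_on_subset[OF inj2 p(2)] s2 by simp
qed


function cf :: "(nat set \<Rightarrow> nat set \<Rightarrow> bool) \<Rightarrow> (nat set \<Rightarrow> bool) \<Rightarrow> nat set \<Rightarrow> nat set list \<Rightarrow> int" where
  "cf R pos W [] = 1"
| "cf R pos W (A # s) = (\<Sum>u\<in>{1..Suc (length s)}.
      if sorted_wrt R (take u (A # s)) \<and> pos (W \<union> \<Union>(set (take u (A # s))))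
      then - cf R pos (W \<union> \<Union>(set (take u (A # s)))) (drop u (A # s)) else 0)"
  by pat_completeness auto
termination by (relation "measure (\<lambda>(R,pos,W,s). length s)") auto

lemma cf_ne: "s \<noteq> [] \<Longrightarrow> cf R pos W s = (\<Sum>u\<in>{1..length s}.
      if sorted_wrt R (take u s) \<and> pos (W \<union> \<Union>(set (take u s)))
      then - cf R pos (W \<union> \<Union>(set (take u s))) (drop u s) else 0)"
  by (cases s) auto

lemma sorted_take_iff: "transp R \<Longrightarrow> sorted_wrt R (take k s) \<longleftrightarrow>
   (\<forall>i. Suc i < k \<and> Suc i < length s \<longrightarrow> R (s ! i) (s ! Suc i))"
  by (auto simp: sorted_wrt_iff_nth_Suc_transp)

definition bad :: "(nat set \<Rightarrow> nat set \<Rightarrow> bool) \<Rightarrow> (nat set \<Rightarrow> bool) \<Rightarrow> nat set \<Rightarrow> nat set list \<Rightarrow> nat \<Rightarrow> bool" where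
  "bad R pos W s u \<longleftrightarrow> 1 \<le> u \<and> u < length s \<and> (R (s ! (u - 1)) (s ! u) \<longleftrightarrow> pos (W \<union> \<Union>(set (take u s))))"

lemma Un_take_drop: "W \<union> \<Union>(set (take u s)) \<union> \<Union>(set (take v (drop u s))) = W \<union> \<Union>(set (take (u + v) s))"
  by (auto simp: take_add)

lemma bad_shift:
  assumes "bad R pos W s w" "1 \<le> u" "u < w"
  shows "bad R pos (W \<union> \<Union>(set (take u s))) (drop u s) (w - u)"
proof -
  have w: "1 \<le> w" "w < length s" using assms by (auto simp: bad_def)
  have e1: "drop u s ! (w - u - 1) = s ! (w - 1)" "drop u s ! (w - u) = s ! w" using assms w by auto
  have e2: "W \<union> \<Union>(set (take u s)) \<union> \<Union>(set (take (w - u) (drop u s))) = W \<union> \<Union>(set (take w s))"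
    using Un_take_drop[of W u s "w - u"] assms by simp
  show ?thesis using assms w e1 e2 unfolding bad_def by auto
qed

lemma cf_zero:
  assumes tr: "transp R"
  shows "bad R pos W s w \<Longrightarrow> cf R pos W s = 0"
proof (induction "length s" arbitrary: W s w rule: less_induct)
  case less
  define u0 where "u0 = (LEAST u. bad R pos W s u)"
  have b0: "bad R pos W s u0" unfolding u0_def by (rule LeastI[where P="bad R pos W s", OF less.prems])
  have mn: "\<And>u. u < u0 \<Longrightarrow> \<not> bad R pos W s u" unfolding u0_def by (rule not_less_Least)
  have u0: "1 \<le> u0" "u0 < length s" using b0 by (auto simp: bad_def)
  define N where "N = length s"
  have sne: "s \<noteq> []" using u0 by auto
  define T where "T = (\<lambda>u. if sorted_wrt R (take u s) \<and> pos (W \<union> \<Union>(set (take u s)))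
      then - cf R pos (W \<union> \<Union>(set (take u s))) (drop u s) else 0)"
  have cfT: "cf R pos W s = (\<Sum>u\<in>{1..N}. T u)" unfolding T_def N_def by (rule cf_ne[OF sne])
  have low: "T u = 0" if "u \<in> {1..<u0}" for u
  proof -
    have "bad R pos (W \<union> \<Union>(set (take u s))) (drop u s) (u0 - u)" using bad_shift[OF b0] that by auto
    moreover have "length (drop u s) < length s" using that u0 by auto
    ultimately have "cf R pos (W \<union> \<Union>(set (take u s))) (drop u s) = 0" using less.hyps by blast
    thus ?thesis by (simp add: T_def)
  qed
  define W' where "W' = W \<union> \<Union>(set (take u0 s))"
  define s' where "s' = drop u0 s"
  have s'ne: "s' \<noteq> []" using u0 by (simp add: s'_def)
  have ls': "length s' = N - u0" by (simp add: s'_def N_def)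
  have split: "{1..N} = {1..<u0} \<union> ({u0} \<union> {u0<..N})" using u0 by (auto simp: N_def)
  have sumsplit: "(\<Sum>u\<in>{1..N}. T u) = (\<Sum>u\<in>{1..<u0}. T u) + (T u0 + (\<Sum>u\<in>{u0<..N}. T u))"
    unfolding split by (subst sum.union_disjoint) (auto simp: sum.union_disjoint)
  have hi_shift: "(\<Sum>u\<in>{u0<..N}. T u) = (\<Sum>v\<in>{1..N - u0}. T (u0 + v))"
  proof -
    have img: "{u0<..N} = (\<lambda>v. u0 + v) ` {1..N - u0}" using u0 by (auto simp: N_def image_iff)
    have inj: "inj_on (\<lambda>v. u0 + v) {1..N - u0}" by (auto simp: inj_on_def)
    show ?thesis unfolding img by (simp only: sum.reindex[OF inj] comp_def)
  qed
  have takeeq: "W \<union> \<Union>(set (take (u0 + v) s)) = W' \<union> \<Union>(set (take v s'))" for v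
    using Un_take_drop[of W u0 s v] by (simp add: W'_def s'_def)
  have dropeq: "drop (u0 + v) s = drop v s'" for v by (simp add: s'_def add.commute)
  have sortsplit: "sorted_wrt R (take (u0 + v) s) \<longleftrightarrow>
      sorted_wrt R (take u0 s) \<and> R (s ! (u0 - 1)) (s ! u0) \<and> sorted_wrt R (take v s')" if "1 \<le> v" for v
  proof -
    have "(\<forall>i. Suc i < u0 + v \<and> Suc i < length s \<longrightarrow> R (s ! i) (s ! Suc i)) \<longleftrightarrow>
      (\<forall>i. Suc i < u0 \<and> Suc i < length s \<longrightarrow> R (s ! i) (s ! Suc i)) \<and> R (s ! (u0 - 1)) (s ! u0) \<and>
      (\<forall>i. Suc i < v \<and> Suc i < length s' \<longrightarrow> R (s' ! i) (s' ! Suc i))"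
    proof safe
      fix i assume h: "\<forall>i. Suc i < u0 + v \<and> Suc i < length s \<longrightarrow> R (s ! i) (s ! Suc i)"
      { fix i assume "Suc i < u0" "Suc i < length s" thus "R (s ! i) (s ! Suc i)" using h by auto }
      { have "Suc (u0 - 1) < u0 + v" "Suc (u0 - 1) < length s" using u0 that by auto
        hence "R (s ! (u0 - 1)) (s ! Suc (u0 - 1))" using h by blast
        thus "R (s ! (u0 - 1)) (s ! u0)" using u0 by simp }
      { fix i assume "Suc i < v" "Suc i < length s'"
        hence "R (s ! (u0 + i)) (s ! Suc (u0 + i))" using h by (auto simp: s'_def)
        thus "R (s' ! i) (s' ! Suc i)" using u0 by (simp add: s'_def) }
    next
      fix i assume h1: "\<forall>i. Suc i < u0 \<and> Suc i < length s \<longrightarrow> R (s ! i) (s ! Suc i)"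
        and h2: "R (s ! (u0 - 1)) (s ! u0)"
        and h3: "\<forall>i. Suc i < v \<and> Suc i < length s' \<longrightarrow> R (s' ! i) (s' ! Suc i)"
        and i: "Suc i < u0 + v" "Suc i < length s"
      show "R (s ! i) (s ! Suc i)"
      proof (cases "Suc i < u0")
        case True thus ?thesis using h1 i by auto
      next
        case False
        show ?thesis
        proof (cases "i = u0 - 1")
          case True thus ?thesis using h2 u0 by (simp add: Suc_diff_1)
        next
          case False
          hence "i \<ge> u0" using \<open>\<not> Suc i < u0\<close> by auto
          then obtain j where j: "i = u0 + j" by (metis le_Suc_ex)
          have "Suc j < v" "Suc j < length s'" using i j by (auto simp: s'_def)
          hence "R (s' ! j) (s' ! Suc j)" using h3 by auto
          thus ?thesis using j u0 by (simp add: s'_def)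
        qed
      qed
    qed
    thus ?thesis using sorted_take_iff[OF tr] by (metis (no_types, lifting))
  qed
  have lowsum: "(\<Sum>u\<in>{1..<u0}. T u) = 0" using low by simp
  show "cf R pos W s = 0"
  proof (cases "R (s ! (u0 - 1)) (s ! u0)")
    case True
    hence p0: "pos W'" using b0 by (simp add: bad_def W'_def)
    have Tu0: "T u0 = (if sorted_wrt R (take u0 s) then - cf R pos W' s' else 0)"
      using p0 by (simp add: T_def W'_def s'_def)
    have Thi: "T (u0 + v) = (if sorted_wrt R (take u0 s) then
        (if sorted_wrt R (take v s') \<and> pos (W' \<union> \<Union>(set (take v s')))
         then - cf R pos (W' \<union> \<Union>(set (take v s'))) (drop v s') else 0) else 0)" if "1 \<le> v" for v
      using sortsplit[OF that] True unfolding T_def takeeq dropeq by auto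
    have "(\<Sum>v\<in>{1..N - u0}. T (u0 + v)) = (if sorted_wrt R (take u0 s) then cf R pos W' s' else 0)"
      using Thi cf_ne[OF s'ne, of R pos W'] ls' by (auto intro: sum.cong)
    thus ?thesis using cfT sumsplit lowsum hi_shift Tu0 by simp
  next
    case False
    hence np: "\<not> pos W'" using b0 by (simp add: bad_def W'_def)
    have Tu0: "T u0 = 0" using np by (simp add: T_def W'_def)
    have "T (u0 + v) = 0" if "1 \<le> v" for v
      using sortsplit[OF that] False unfolding T_def by auto
    hence "(\<Sum>v\<in>{1..N - u0}. T (u0 + v)) = 0" by simp
    thus ?thesis using cfT sumsplit lowsum hi_shift Tu0 by simp
  qed
qed


definition Qs :: "nat set \<Rightarrow> (nat \<Rightarrow> real) \<Rightarrow> nat set \<Rightarrow> nat set list set" where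
  "Qs U lam W = {P. (\<forall>I\<in>set P. I \<noteq> {}) \<and> dlist P \<and> \<Union>(set P) = U - W \<and>
      (\<forall>i\<in>{1..length P}. sJ lam (W \<union> \<Union>(set (take i P))) > 0)}"

lemma finite_Qs: "finite U \<Longrightarrow> finite (Qs U lam W)"
proof -
  assume f: "finite U"
  have "Qs U lam W \<subseteq> {s. set s \<subseteq> Pow U \<and> length s \<le> card U}"
  proof
    fix P assume "P \<in> Qs U lam W"
    hence P: "\<forall>I\<in>set P. I \<noteq> {}" "dlist P" "\<Union>(set P) = U - W" by (auto simp: Qs_def)
    have fin: "\<forall>A\<in>set P. finite A \<and> A \<noteq> {}"
    proof
      fix A assume A: "A \<in> set P"
      hence "A \<subseteq> U" using P(3) by auto
      thus "finite A \<and> A \<noteq> {}" using f P(1) A finite_subset by auto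
    qed
    have "length P \<le> card (\<Union>(set P))" using length_le_card_dlist[OF P(2) fin] .
    also have "\<dots> \<le> card U" using P(3) f by (simp add: card_mono)
    finally show "P \<in> {s. set s \<subseteq> Pow U \<and> length s \<le> card U}" using P(3) by auto
  qed
  moreover have "finite {s. set s \<subseteq> Pow U \<and> length s \<le> card U}"
    using f by (intro finite_lists_length_le) auto
  ultimately show ?thesis by (rule finite_subset)
qed

lemma Qs_full: "Qs U lam U = {[]}"
proof -
  have "P = []" if "P \<in> Qs U lam U" for P
  proof -
    have "\<forall>I\<in>set P. I \<noteq> {}" "\<Union>(set P) = {}" using that by (auto simp: Qs_def)
    thus ?thesis by (cases P) auto
  qed
  moreover have "[] \<in> Qs U lam U" by (simp add: Qs_def)
  ultimately show ?thesis by blast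
qed

lemma Qs_rec:
  assumes "W \<subseteq> U" "W \<noteq> U"
  shows "Qs U lam W = (\<lambda>(I,P). I # P) ` (SIGMA I:{I. I \<subseteq> U - W \<and> I \<noteq> {} \<and> sJ lam (W \<union> I) > 0}. Qs U lam (W \<union> I))"
proof (intro set_eqI iffI)
  fix P assume P: "P \<in> Qs U lam W"
  hence p: "\<forall>I\<in>set P. I \<noteq> {}" "dlist P" "\<Union>(set P) = U - W"
      "\<forall>i\<in>{1..length P}. sJ lam (W \<union> \<Union>(set (take i P))) > 0" by (auto simp: Qs_def)
  have "P \<noteq> []" using p(3) assms by auto
  then obtain I P' where PP: "P = I # P'" by (cases P) auto
  have d: "I \<inter> \<Union>(set P') = {}" "dlist P'" using p(2) PP by (auto simp: dlist_Cons)
  have pos1: "sJ lam (W \<union> I) > 0" using p(4)[rule_format, of 1] PP by simp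
  have "P' \<in> Qs U lam (W \<union> I)"
    unfolding Qs_def
  proof (intro CollectI conjI ballI)
    show "\<And>J. J \<in> set P' \<Longrightarrow> J \<noteq> {}" using p(1) PP by auto
    show "dlist P'" by (rule d(2))
    show "\<Union>(set P') = U - (W \<union> I)" using p(3) PP d(1) by auto
    fix i assume i: "i \<in> {1..length P'}"
    have "Suc i \<in> {1..length P}" using i PP by auto
    hence "sJ lam (W \<union> \<Union>(set (take (Suc i) P))) > 0" using p(4) by blast
    moreover have "W \<union> \<Union>(set (take (Suc i) P)) = W \<union> I \<union> \<Union>(set (take i P'))" using PP by auto
    ultimately show "sJ lam (W \<union> I \<union> \<Union>(set (take i P'))) > 0" by simp
  qed
  moreover have "I \<subseteq> U - W" "I \<noteq> {}" using p PP by auto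
  ultimately show "P \<in> (\<lambda>(I,P). I # P) ` (SIGMA I:{I. I \<subseteq> U - W \<and> I \<noteq> {} \<and> sJ lam (W \<union> I) > 0}. Qs U lam (W \<union> I))"
    using PP pos1 by (auto intro!: image_eqI[of _ _ "(I, P')"])
next
  fix P assume "P \<in> (\<lambda>(I,P). I # P) ` (SIGMA I:{I. I \<subseteq> U - W \<and> I \<noteq> {} \<and> sJ lam (W \<union> I) > 0}. Qs U lam (W \<union> I))"
  then obtain I P' where PP: "P = I # P'" and I: "I \<subseteq> U - W" "I \<noteq> {}" "sJ lam (W \<union> I) > 0"
    and P': "P' \<in> Qs U lam (W \<union> I)" by auto
  have p: "\<forall>I\<in>set P'. I \<noteq> {}" "dlist P'" "\<Union>(set P') = U - (W \<union> I)"
      "\<forall>i\<in>{1..length P'}. sJ lam (W \<union> I \<union> \<Union>(set (take i P'))) > 0" using P' by (auto simp: Qs_def)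
  show "P \<in> Qs U lam W"
    unfolding Qs_def
  proof (intro CollectI conjI ballI)
    show "\<And>J. J \<in> set P \<Longrightarrow> J \<noteq> {}" using p(1) I PP by auto
    show "dlist P" using p(2,3) PP by (auto simp: dlist_Cons)
    show "\<Union>(set P) = U - W" using p(3) I PP by auto
    fix i assume i: "i \<in> {1..length P}"
    show "sJ lam (W \<union> \<Union>(set (take i P))) > 0"
    proof (cases "i = 1")
      case True thus ?thesis using I PP by simp
    next
      case False
      then obtain j where j: "i = Suc j" "j \<in> {1..length P'}" using i PP by (cases i) auto
      have "W \<union> \<Union>(set (take i P)) = W \<union> I \<union> \<Union>(set (take j P'))" using PP j by auto
      thus ?thesis using p(4) j by simp
    qed
  qed
qed

lemma AL_split:
  assumes fS: "finite S"
  shows "(\<Sum>s\<in>AL S. \<Sum>u\<in>{1..length s}. G (take u s) (drop u s)) =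
         (\<Sum>I\<in>{I. I \<subseteq> S \<and> I \<noteq> {}}. \<Sum>g\<in>AL I. \<Sum>t\<in>AL (S - I). G g t)"
proof -
  have fP: "finite {I. I \<subseteq> S \<and> I \<noteq> {}}" using fS by simp
  have l: "(\<Sum>s\<in>AL S. \<Sum>u\<in>{1..length s}. G (take u s) (drop u s)) =
      (\<Sum>(s,u)\<in>(SIGMA s:AL S. {1..length s}). G (take u s) (drop u s))"
    by (rule sum.Sigma) (auto simp: finite_AL fS)
  have r: "(\<Sum>I\<in>{I. I \<subseteq> S \<and> I \<noteq> {}}. \<Sum>g\<in>AL I. \<Sum>t\<in>AL (S - I). G g t) =
      (\<Sum>(I,p)\<in>(SIGMA I:{I. I \<subseteq> S \<and> I \<noteq> {}}. (SIGMA g:AL I. AL (S - I))). G (fst p) (snd p))"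
  proof -
    have "(\<Sum>I\<in>{I. I \<subseteq> S \<and> I \<noteq> {}}. \<Sum>g\<in>AL I. \<Sum>t\<in>AL (S - I). G g t) =
        (\<Sum>I\<in>{I. I \<subseteq> S \<and> I \<noteq> {}}. \<Sum>(g,t)\<in>(SIGMA g:AL I. AL (S - I)). G g t)"
    proof (rule sum.cong[OF refl])
      fix I assume "I \<in> {I. I \<subseteq> S \<and> I \<noteq> {}}"
      hence "finite I" using fS finite_subset by auto
      thus "(\<Sum>g\<in>AL I. \<Sum>t\<in>AL (S - I). G g t) = (\<Sum>(g,t)\<in>(SIGMA g:AL I. AL (S - I)). G g t)"
        by (intro sum.Sigma) (auto simp: finite_AL fS)
    qed
    also have "\<dots> = (\<Sum>(I,p)\<in>(SIGMA I:{I. I \<subseteq> S \<and> I \<noteq> {}}. (SIGMA g:AL I. AL (S - I))). (case p of (g,t) \<Rightarrow> G g t))"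
      by (rule sum.Sigma) (auto simp: fP finite_AL fS finite_subset intro!: finite_SigmaI)
    finally show ?thesis by (simp add: case_prod_beta)
  qed
  have "(\<Sum>(s,u)\<in>(SIGMA s:AL S. {1..length s}). G (take u s) (drop u s)) =
      (\<Sum>(I,p)\<in>(SIGMA I:{I. I \<subseteq> S \<and> I \<noteq> {}}. (SIGMA g:AL I. AL (S - I))). G (fst p) (snd p))"
  proof (rule sum.reindex_bij_witness[where i="\<lambda>(I,p). (fst p @ snd p, length (fst p))"
        and j="\<lambda>(s,u). (\<Union>(set (take u s)), (take u s, drop u s))"])
    fix a assume a: "a \<in> (SIGMA s:AL S. {1..length s})"
    obtain s u where su: "a = (s, u)" by (cases a)
    have s: "\<forall>A\<in>set s. atom A" "dlist s" "\<Union>(set s) = S" "1 \<le> u" "u \<le> length s"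
      using a su by (auto simp: AL_def)
    show "(\<lambda>(I,p). (fst p @ snd p, length (fst p))) ((\<lambda>(s,u). (\<Union>(set (take u s)), (take u s, drop u s))) a) = a"
      using su s by simp
    have dd: "\<Union>(set (take u s)) \<inter> \<Union>(set (drop u s)) = {}" using s(2) dlist_append[of "take u s" "drop u s"] by simp
    have un: "\<Union>(set (take u s)) \<union> \<Union>(set (drop u s)) = S" using s(3) by (metis append_take_drop_id set_append Union_Un_distrib)
    have ne: "\<Union>(set (take u s)) \<noteq> {}"
    proof -
      obtain A s0 where As: "s = A # s0" using s(4,5) by (cases s) auto
      obtain u' where u': "u = Suc u'" using s(4) by (cases u) auto
      have "A \<in> set (take u s)" using As u' by simp
      moreover have "A \<noteq> {}" using s(1) As atom_ne by auto
      ultimately show ?thesis by blast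
    qed
    show "(\<lambda>(s,u). (\<Union>(set (take u s)), (take u s, drop u s))) a \<in> (SIGMA I:{I. I \<subseteq> S \<and> I \<noteq> {}}. (SIGMA g:AL I. AL (S - I)))"
      using su s dd un ne by (auto simp: AL_def dlist_take dlist_drop dest: in_set_takeD in_set_dropD)
    show "(case (\<lambda>(s,u). (\<Union>(set (take u s)), (take u s, drop u s))) a of (I, p) \<Rightarrow> G (fst p) (snd p)) =
       (case a of (s, u) \<Rightarrow> G (take u s) (drop u s))" using su by simp
  next
    fix b assume b: "b \<in> (SIGMA I:{I. I \<subseteq> S \<and> I \<noteq> {}}. (SIGMA g:AL I. AL (S - I)))"
    obtain I g t where b': "b = (I, (g, t))" by (cases b) auto
    have h: "I \<subseteq> S" "I \<noteq> {}" "\<forall>A\<in>set g. atom A" "dlist g" "\<Union>(set g) = I"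
      "\<forall>A\<in>set t. atom A" "dlist t" "\<Union>(set t) = S - I" using b b' by (auto simp: AL_def)
    show "(\<lambda>(s,u). (\<Union>(set (take u s)), (take u s, drop u s))) ((\<lambda>(I,p). (fst p @ snd p, length (fst p))) b) = b"
      using b' h by simp
    have gne: "g \<noteq> []" using h by auto
    have "dlist (g @ t)" using h by (auto simp: dlist_append)
    moreover have "\<Union>(set (g @ t)) = S" using h by auto
    ultimately show "(\<lambda>(I,p). (fst p @ snd p, length (fst p))) b \<in> (SIGMA s:AL S. {1..length s})"
      using b' h gne by (auto simp: AL_def Suc_le_eq)
  qed
  thus ?thesis using l r by simp
qed


lemma main_rec:
  fixes key :: "nat set \<Rightarrow> 'k::linorder"
  assumes fU: "finite U"
    and expand: "\<And>I. I \<subseteq> U \<Longrightarrow> aK (card I) = (\<Sum>g\<in>SAP key I. wtl r g * of_int (epsl g))"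
  shows "W \<subseteq> U \<Longrightarrow> (\<Sum>P\<in>Qs U lam W. of_int ((-1) ^ length P * epsl P) * prod_list (map (\<lambda>I. aK (card I)) P))
        = (\<Sum>s\<in>AL (U - W). wtl r s * of_int (epsl s * cf (\<lambda>A B. key A < key B) (\<lambda>S. sJ lam S > 0) W s))"
proof (induction "card (U - W)" arbitrary: W rule: less_induct)
  case less
  define R where "R = (\<lambda>A B. key A < key B)"
  define pos where "pos = (\<lambda>S. sJ lam S > (0::real))"
  define LH where "LH = (\<lambda>W. (\<Sum>P\<in>Qs U lam W. of_int ((-1) ^ length P * epsl P) * prod_list (map (\<lambda>I. aK (card I)) P)))"
  define RH where "RH = (\<lambda>W. (\<Sum>s\<in>AL (U - W). wtl r s * of_int (epsl s * cf R pos W s)))"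
  have goal: "LH W = RH W"
  proof (cases "W = U")
    case True
    thus ?thesis by (simp add: LH_def RH_def Qs_full AL_empty)
  next
    case False
    let ?Ix = "{I. I \<subseteq> U - W \<and> I \<noteq> {}}"
    have fIx: "finite ?Ix" using fU by simp
    have IH: "LH (W \<union> I) = RH (W \<union> I)" if "I \<in> ?Ix" for I
    proof -
      have "card (U - (W \<union> I)) < card (U - W)" using that fU by (intro psubset_card_mono) auto
      moreover have "W \<union> I \<subseteq> U" using that less.prems by auto
      ultimately show ?thesis using less.hyps unfolding LH_def RH_def R_def pos_def by blast
    qed
    have finI: "finite I" if "I \<in> ?Ix" for I using that fU finite_subset by blast
    have injC: "inj_on (\<lambda>(I,P). I # P) (SIGMA I:{I \<in> ?Ix. pos (W \<union> I)}. Qs U lam (W \<union> I))"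
      by (auto simp: inj_on_def)
    have setI: "{I. I \<subseteq> U - W \<and> I \<noteq> {} \<and> sJ lam (W \<union> I) > 0} = {I \<in> ?Ix. pos (W \<union> I)}"
      by (auto simp: pos_def)
    have "LH W = (\<Sum>(I,P)\<in>(SIGMA I:{I \<in> ?Ix. pos (W \<union> I)}. Qs U lam (W \<union> I)).
        of_int ((-1) ^ length (I # P) * epsl (I # P)) * prod_list (map (\<lambda>I. aK (card I)) (I # P)))"
      unfolding LH_def Qs_rec[OF less.prems False] setI
      by (subst sum.reindex[OF injC]) (simp add: case_prod_unfold comp_def)
    also have "\<dots> = (\<Sum>I\<in>{I \<in> ?Ix. pos (W \<union> I)}. \<Sum>P\<in>Qs U lam (W \<union> I).
        of_int ((-1) ^ length (I # P) * epsl (I # P)) * prod_list (map (\<lambda>I. aK (card I)) (I # P)))"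
      by (rule sum.Sigma[symmetric]) (auto simp: fIx finite_Qs fU)
    also have "\<dots> = (\<Sum>I\<in>{I \<in> ?Ix. pos (W \<union> I)}. - of_int (iota I (U - (W \<union> I))) * aK (card I) * LH (W \<union> I))"
    proof (rule sum.cong[OF refl])
      fix I assume I: "I \<in> {I \<in> ?Ix. pos (W \<union> I)}"
      have pw: "of_int ((-1) ^ length (I # P) * epsl (I # P)) * prod_list (map (\<lambda>I. aK (card I)) (I # P)) =
          - of_int (iota I (U - (W \<union> I))) * aK (card I) * (of_int ((-1) ^ length P * epsl P) * prod_list (map (\<lambda>I. aK (card I)) P))"
        if P: "P \<in> Qs U lam (W \<union> I)" for P
      proof -
        have "\<Union>(set P) = U - (W \<union> I)" using P by (simp add: Qs_def)
        thus ?thesis by (simp add: algebra_simps)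
      qed
      have "(\<Sum>P\<in>Qs U lam (W \<union> I). of_int ((-1) ^ length (I # P) * epsl (I # P)) * prod_list (map (\<lambda>I. aK (card I)) (I # P))) =
          (\<Sum>P\<in>Qs U lam (W \<union> I). - of_int (iota I (U - (W \<union> I))) * aK (card I) * (of_int ((-1) ^ length P * epsl P) * prod_list (map (\<lambda>I. aK (card I)) P)))"
        by (rule sum.cong[OF refl]) (rule pw)
      also have "\<dots> = - of_int (iota I (U - (W \<union> I))) * aK (card I) * LH (W \<union> I)"
        unfolding LH_def by (rule sum_distrib_left[symmetric])
      finally show "(\<Sum>P\<in>Qs U lam (W \<union> I). of_int ((-1) ^ length (I # P) * epsl (I # P)) * prod_list (map (\<lambda>I. aK (card I)) (I # P))) =
          - of_int (iota I (U - (W \<union> I))) * aK (card I) * LH (W \<union> I)" .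
    qed
    also have "\<dots> = (\<Sum>I\<in>?Ix. if pos (W \<union> I) then - of_int (iota I (U - (W \<union> I))) * aK (card I) * LH (W \<union> I) else 0)"
      by (simp only: sum.inter_filter[OF fIx])
    finally have LHe: "LH W = (\<Sum>I\<in>?Ix. if pos (W \<union> I) then - of_int (iota I (U - (W \<union> I))) * aK (card I) * LH (W \<union> I) else 0)" .
    define G where "G = (\<lambda>g t. if sorted_wrt R g \<and> pos (W \<union> \<Union>(set g))
        then - (wtl r (g @ t) * of_int (epsl (g @ t) * cf R pos (W \<union> \<Union>(set g)) t)) else 0)"
    have sne: "s \<noteq> []" if "s \<in> AL (U - W)" for s
      using that False less.prems by (auto simp: AL_def)
    have "RH W = (\<Sum>s\<in>AL (U - W). \<Sum>u\<in>{1..length s}. G (take u s) (drop u s))"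
      unfolding RH_def
    proof (rule sum.cong[OF refl])
      fix s assume s: "s \<in> AL (U - W)"
      have "wtl r s * of_int (epsl s * cf R pos W s) = (\<Sum>u\<in>{1..length s}. wtl r s * of_int (epsl s *
          (if sorted_wrt R (take u s) \<and> pos (W \<union> \<Union>(set (take u s)))
           then - cf R pos (W \<union> \<Union>(set (take u s))) (drop u s) else 0)))"
        unfolding cf_ne[OF sne[OF s]] by (simp add: sum_distrib_left of_int_sum)
      also have "\<dots> = (\<Sum>u\<in>{1..length s}. G (take u s) (drop u s))"
        by (intro sum.cong refl) (simp add: G_def)
      finally show "wtl r s * of_int (epsl s * cf R pos W s) = (\<Sum>u\<in>{1..length s}. G (take u s) (drop u s))" .
    qed
    also have "\<dots> = (\<Sum>I\<in>?Ix. \<Sum>g\<in>AL I. \<Sum>t\<in>AL (U - W - I). G g t)"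
      by (rule AL_split) (simp add: fU)
    also have "\<dots> = (\<Sum>I\<in>?Ix. if pos (W \<union> I) then - of_int (iota I (U - (W \<union> I))) * aK (card I) * RH (W \<union> I) else 0)"
    proof (rule sum.cong[OF refl])
      fix I assume I: "I \<in> ?Ix"
      have UWI: "U - W - I = U - (W \<union> I)" by auto
      have Gg: "G g t = (if sorted_wrt R g \<and> pos (W \<union> I) then
          - of_int (iota I (U - (W \<union> I))) * (wtl r g * of_int (epsl g)) * (wtl r t * of_int (epsl t * cf R pos (W \<union> I) t)) else 0)"
        if g: "g \<in> AL I" and t: "t \<in> AL (U - (W \<union> I))" for g t
      proof -
        have gh: "\<forall>A\<in>set g. atom A" "dlist g" "\<Union>(set g) = I" using g by (auto simp: AL_def)
        have th: "\<forall>A\<in>set t. atom A" "dlist t" "\<Union>(set t) = U - (W \<union> I)" using t by (auto simp: AL_def)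
        have "dlist (g @ t)" using gh th by (auto simp: dlist_append)
        moreover have "\<forall>A\<in>set (g @ t). finite A" using gh th atom_fin by auto
        ultimately have "epsl (g @ t) = epsl g * epsl t * iota I (U - (W \<union> I))"
          using epsl_append gh th by simp
        thus ?thesis unfolding G_def using gh by (simp add: algebra_simps)
      qed
      have "(\<Sum>g\<in>AL I. \<Sum>t\<in>AL (U - W - I). G g t) = (\<Sum>g\<in>AL I. if sorted_wrt R g \<and> pos (W \<union> I) then
          - of_int (iota I (U - (W \<union> I))) * (wtl r g * of_int (epsl g)) * RH (W \<union> I) else 0)"
        unfolding UWI
      proof (rule sum.cong[OF refl])
        fix g assume g: "g \<in> AL I"
        show "(\<Sum>t\<in>AL (U - (W \<union> I)). G g t) = (if sorted_wrt R g \<and> pos (W \<union> I) then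
          - of_int (iota I (U - (W \<union> I))) * (wtl r g * of_int (epsl g)) * RH (W \<union> I) else 0)"
        proof -
          have "(\<Sum>t\<in>AL (U - (W \<union> I)). G g t) = (\<Sum>t\<in>AL (U - (W \<union> I)). if sorted_wrt R g \<and> pos (W \<union> I) then
            - of_int (iota I (U - (W \<union> I))) * (wtl r g * of_int (epsl g)) * (wtl r t * of_int (epsl t * cf R pos (W \<union> I) t)) else 0)"
            by (rule sum.cong[OF refl]) (rule Gg[OF g])
          also have "\<dots> = (if sorted_wrt R g \<and> pos (W \<union> I) then
            - of_int (iota I (U - (W \<union> I))) * (wtl r g * of_int (epsl g)) * RH (W \<union> I) else 0)"
          proof (cases "sorted_wrt R g \<and> pos (W \<union> I)")
            case True thus ?thesis by (simp add: RH_def sum_distrib_left)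
          next
            case False thus ?thesis by (simp only: if_not_P[OF False] if_False sum.neutral_const)
          qed
          finally show ?thesis .
        qed
      qed
      also have "\<dots> = (if pos (W \<union> I) then - of_int (iota I (U - (W \<union> I))) *
          (\<Sum>g\<in>SAP key I. wtl r g * of_int (epsl g)) * RH (W \<union> I) else 0)"
      proof (cases "pos (W \<union> I)")
        case True
        have "(\<Sum>g\<in>AL I. if sorted_wrt R g then - of_int (iota I (U - (W \<union> I))) * (wtl r g * of_int (epsl g)) * RH (W \<union> I) else 0)
            = (\<Sum>g\<in>{g\<in>AL I. sorted_wrt R g}. - of_int (iota I (U - (W \<union> I))) * (wtl r g * of_int (epsl g)) * RH (W \<union> I))"
          by (simp only: sum.inter_filter[OF finite_AL[OF finI[OF I]]])
        also have "{g\<in>AL I. sorted_wrt R g} = SAP key I" by (simp add: SAP_def R_def)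
        finally show ?thesis using True by (simp add: sum_distrib_left sum_distrib_right)
      qed simp
      also have "\<dots> = (if pos (W \<union> I) then - of_int (iota I (U - (W \<union> I))) * aK (card I) * RH (W \<union> I) else 0)"
      proof -
        have "I \<subseteq> U" using I by auto
        thus ?thesis using expand[of I] by simp
      qed
      finally show "(\<Sum>g\<in>AL I. \<Sum>t\<in>AL (U - W - I). G g t) =
          (if pos (W \<union> I) then - of_int (iota I (U - (W \<union> I))) * aK (card I) * RH (W \<union> I) else 0)" .
    qed
    finally have RHe: "RH W = (\<Sum>I\<in>?Ix. if pos (W \<union> I) then - of_int (iota I (U - (W \<union> I))) * aK (card I) * RH (W \<union> I) else 0)" .
    show ?thesis unfolding LHe RHe using IH by (intro sum.cong refl) auto
  qed
  thus ?case unfolding LH_def RH_def R_def pos_def .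
qed


lemma generic:
  fixes n :: nat and lam :: "nat \<Rightarrow> real"
  assumes posU: "sJ lam {1..n} > 0" and N: "Nlam n lam = n"
  shows "\<And>S. S \<subseteq> {1..n} \<Longrightarrow> S \<noteq> {1..n} \<Longrightarrow> sJ lam S > 0 \<Longrightarrow> sJ lam S / real (card S) > sJ lam {1..n} / real n"
proof -
  let ?U = "{1..n}"
  let ?D = "{sJ lam J / real (card J) | J. J \<subseteq> ?U \<and> sJ lam J > 0}"
  have Dimg: "?D = (\<lambda>J. sJ lam J / real (card J)) ` {J. J \<subseteq> ?U \<and> sJ lam J > 0}" by auto
  have fD: "finite ?D" unfolding Dimg by simp
  have neD: "?D \<noteq> {}" using posU by auto
  have dl: "delta n lam = Min ?D" by (simp add: delta_def)
  have le: "delta n lam \<le> sJ lam J / real (card J)" if "J \<subseteq> ?U" "sJ lam J > 0" for J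
    unfolding dl using fD that by (intro Min_le) auto
  have "Min ?D \<in> ?D" using fD neD by (rule Min_in)
  then obtain J0 where J0: "J0 \<subseteq> ?U" "sJ lam J0 > 0" "sJ lam J0 / real (card J0) = delta n lam" using dl by auto
  let ?NS = "{card J | J. J \<subseteq> ?U \<and> sJ lam J / real (card J) = delta n lam}"
  have NSimg: "?NS = card ` {J. J \<subseteq> ?U \<and> sJ lam J / real (card J) = delta n lam}" by auto
  have fNS: "finite ?NS" unfolding NSimg by simp
  have Nl: "Nlam n lam = Min ?NS" by (simp add: Nlam_def)
  have nle: "n \<le> card J" if "J \<subseteq> ?U" "sJ lam J / real (card J) = delta n lam" for J
  proof -
    have cJ: "card J \<in> ?NS" using that by auto
    have "Min ?NS \<le> card J" by (rule Min_le[OF fNS cJ])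
    thus ?thesis using N Nl by simp
  qed
  have J0U: "J0 = ?U"
  proof -
    have "n \<le> card J0" using nle J0 by simp
    moreover have "card J0 \<le> n" using J0(1) card_mono[of ?U J0] by simp
    ultimately have "card J0 = card ?U" by simp
    thus ?thesis using J0(1) by (intro card_subset_eq) auto
  qed
  have dval: "delta n lam = sJ lam ?U / real n" using J0 J0U by simp
  fix S assume S: "S \<subseteq> ?U" "S \<noteq> ?U" "sJ lam S > 0"
  have "delta n lam \<le> sJ lam S / real (card S)" using le S by simp
  moreover have "sJ lam S / real (card S) \<noteq> delta n lam"
  proof
    assume "sJ lam S / real (card S) = delta n lam"
    hence "n \<le> card S" using nle S by simp
    moreover have "card S \<le> n" using S(1) card_mono[of ?U S] by simp
    ultimately have "card S = card ?U" by simp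
    hence "S = ?U" using S(1) by (intro card_subset_eq) auto
    thus False using S by simp
  qed
  ultimately show "sJ lam S / real (card S) > sJ lam ?U / real n" using dval by simp
qed

lemma sJ_Un: "finite A \<Longrightarrow> finite B \<Longrightarrow> A \<inter> B = {} \<Longrightarrow> sJ lam (A \<union> B) = sJ lam A + sJ lam B"
  by (simp add: sJ_def sum.union_disjoint)

lemma bad_exists:
  fixes key :: "nat set \<Rightarrow> real \<times> (nat \<times> nat)" and lam :: "nat \<Rightarrow> real"
  assumes n1: "n \<ge> 1"
    and posU: "sJ lam {1..n} > 0"
    and gen: "\<And>S. S \<subseteq> {1..n} \<Longrightarrow> S \<noteq> {1..n} \<Longrightarrow> sJ lam S > 0 \<Longrightarrow> sJ lam S / real (card S) > sJ lam {1..n} / real n"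
    and keyfst: "\<And>A. fst (key A) = - (sJ lam A / real (card A))"
    and injk: "inj_on key {A. atom A \<and> A \<subseteq> {1..n}}"
    and s: "s \<in> AL {1..n}" and ls: "length s \<ge> 2"
  shows "\<exists>w. bad (\<lambda>A B. key A < key B) (\<lambda>S. sJ lam S > 0) {} s w"
proof (rule ccontr)
  assume nb: "\<not> (\<exists>w. bad (\<lambda>A B. key A < key B) (\<lambda>S. sJ lam S > 0) {} s w)"
  let ?U = "{1..n}"
  let ?R = "\<lambda>A B. key A < key B"
  define N where "N = length s"
  define St where "St = (\<lambda>u. \<Union>(set (take u s)))"
  define d where "d = sJ lam ?U / real n"
  define m where "m = (\<lambda>S. sJ lam S - d * real (card S))"
  define sl where "sl = (\<lambda>A. sJ lam A / real (card A))"
  have sp: "\<forall>A\<in>set s. atom A" "dlist s" "\<Union>(set s) = ?U" using s by (auto simp: AL_def)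
  have ds: "distinct s" using sp dlist_distinct atom_ne by blast
  have atoms: "atom (s ! i) \<and> s ! i \<subseteq> ?U" if "i < N" for i
  proof -
    have "s ! i \<in> set s" using that N_def by simp
    thus ?thesis using sp by auto
  qed
  have H: "?R (s ! (u - 1)) (s ! u) \<longleftrightarrow> \<not> sJ lam (St u) > 0" if "1 \<le> u" "u < N" for u
    using nb that unfolding bad_def N_def St_def by auto
  have dpos: "d > 0" using posU n1 by (simp add: d_def)
  have mU: "m ?U = 0" using n1 by (simp add: m_def d_def)
  have St_sub: "St u \<subseteq> ?U" for u using sp by (auto simp: St_def dest: in_set_takeD)
  have St_fin: "finite (St u)" for u using St_sub finite_subset by blast
  have St_Suc: "St (Suc u) = St u \<union> s ! u" "St u \<inter> s ! u = {}" if "u < N" for u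
  proof -
    show "St (Suc u) = St u \<union> s ! u" using that by (auto simp: St_def take_Suc_conv_app_nth N_def)
    have "dlist (take u s @ [s ! u])" using sp(2) that dlist_take[of s "Suc u"]
      by (simp add: take_Suc_conv_app_nth N_def)
    thus "St u \<inter> s ! u = {}" by (simp add: St_def dlist_append)
  qed
  have St_N: "St N = ?U" using sp by (simp add: St_def N_def)
  have St_proper: "St u \<noteq> {}" "St u \<noteq> ?U" if uu: "1 \<le> u" "u < N" for u
  proof -
    obtain A s0 where As: "s = A # s0" using ls by (cases s) auto
    obtain u' where u': "u = Suc u'" using uu(1) by (cases u) auto
    have "s ! 0 \<in> set (take u s)" using As u' by simp
    moreover have "s ! 0 \<noteq> {}" using atoms[of 0] that atom_ne by auto
    ultimately show "St u \<noteq> {}" by (auto simp: St_def)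
    have "s ! u \<noteq> {}" "s ! u \<subseteq> ?U" using atoms[of u] that atom_ne by auto
    moreover have "St u \<inter> s ! u = {}" using St_Suc that by auto
    ultimately show "St u \<noteq> ?U" by auto
  qed
  have posm: "sJ lam S > 0 \<longleftrightarrow> m S > 0" "m S \<noteq> 0" if "S \<subseteq> ?U" "S \<noteq> {}" "S \<noteq> ?U" for S
  proof -
    have cS: "real (card S) > 0" using that finite_subset[OF that(1)] by (simp add: card_gt_0_iff)
    show "sJ lam S > 0 \<longleftrightarrow> m S > 0"
    proof
      assume "sJ lam S > 0"
      hence "sJ lam S / real (card S) > d" using gen that by (simp add: d_def)
      thus "m S > 0" using cS by (simp add: m_def field_simps)
    next
      assume "m S > 0"
      thus "sJ lam S > 0" using dpos cS unfolding m_def by (smt (verit) mult_pos_pos)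
    qed
    show "m S \<noteq> 0"
    proof
      assume "m S = 0"
      hence e: "sJ lam S = d * real (card S)" by (simp add: m_def)
      hence "sJ lam S > 0" using dpos cS by simp
      hence "sJ lam S / real (card S) > d" using gen that by (simp add: d_def)
      thus False using e cS by simp
    qed
  qed
  have madd: "m (A \<union> B) = m A + m B" if "finite A" "finite B" "A \<inter> B = {}" for A B
    using that by (simp add: m_def sJ_Un card_Un_disjoint algebra_simps)
  have msl: "m A > 0 \<longleftrightarrow> sl A > d" "m A < 0 \<longleftrightarrow> sl A < d" if "atom A" for A
  proof -
    have c: "real (card A) > 0" using that by (auto simp: atom_def)
    show "m A > 0 \<longleftrightarrow> sl A > d" using c by (simp add: m_def sl_def field_simps)
    show "m A < 0 \<longleftrightarrow> sl A < d" using c by (simp add: m_def sl_def field_simps)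
  qed
  have Rsl: "sl B \<le> sl A" if "?R A B" for A B
    using that keyfst[of A] keyfst[of B] by (auto simp: sl_def less_prod_def)
  have nRsl: "sl A \<le> sl B" if "\<not> ?R A B" "A \<noteq> B" "atom A" "atom B" "A \<subseteq> ?U" "B \<subseteq> ?U" for A B
  proof -
    have "key A \<noteq> key B" using injk that by (auto simp: inj_on_def)
    hence "key B < key A" using that(1) by auto
    thus ?thesis using Rsl by blast
  qed
  have neq: "s ! (u - 1) \<noteq> s ! u" if "1 \<le> u" "u < N" for u
    using ds that by (simp add: N_def nth_eq_iff_index_eq)
  have St1: "St 1 = s ! 0"
  proof -
    obtain A s0 where "s = A # s0" using ls by (cases s) auto
    thus ?thesis by (simp add: St_def)
  qed
  have N0: "0 < N" using ls unfolding N_def by linarith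
  have a0: "atom (s ! 0)" using atoms[OF N0] by simp
  have m0: "m (s ! 0) \<noteq> 0" using posm(2)[of "St 1"] St_proper[of 1] St_sub[of 1] ls St1 by (simp add: N_def)
  show False
  proof (cases "m (s ! 0) > 0")
    case True
    have claim: "sl (s ! (u - 1)) > d \<and> m (St u) > 0" if "1 \<le> u" "u \<le> N" for u
      using that
    proof (induction u rule: nat_induct_at_least)
      case base
      show ?case using True St1 msl(1)[OF a0] by simp
    next
      case (Suc u)
      have IH: "sl (s ! (u - 1)) > d" "m (St u) > 0" using Suc by auto
      have uN: "u < N" using Suc by simp
      have "sJ lam (St u) > 0" using posm(1)[of "St u"] St_sub St_proper[OF Suc.hyps(1) uN] IH(2) by simp
      hence "\<not> ?R (s ! (u - 1)) (s ! u)" using H[OF Suc.hyps(1) uN] by simp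
      hence "sl (s ! (u - 1)) \<le> sl (s ! u)"
        using nRsl neq[OF Suc.hyps(1) uN] atoms[of "u - 1"] atoms[of u] uN by simp
      hence sl1: "sl (s ! u) > d" using IH by simp
      hence "m (s ! u) > 0" using msl(1) atoms[OF uN] by simp
      moreover have "m (St (Suc u)) = m (St u) + m (s ! u)"
        using St_Suc[OF uN] madd St_fin atoms[OF uN] atom_fin by simp
      ultimately show ?case using IH sl1 by simp
    qed
    have "m (St N) > 0" using claim[of N] ls by (simp add: N_def)
    thus False using St_N mU by simp
  next
    case False
    hence neg: "m (s ! 0) < 0" using m0 by simp
    have claim: "sl (s ! (u - 1)) < d \<and> m (St u) < 0" if "1 \<le> u" "u \<le> N" for u
      using that
    proof (induction u rule: nat_induct_at_least)
      case base
      show ?case using neg St1 msl(2)[OF a0] by simp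
    next
      case (Suc u)
      have IH: "sl (s ! (u - 1)) < d" "m (St u) < 0" using Suc by auto
      have uN: "u < N" using Suc by simp
      have "\<not> sJ lam (St u) > 0" using posm(1)[of "St u"] St_sub St_proper[OF Suc.hyps(1) uN] IH(2) by simp
      hence "?R (s ! (u - 1)) (s ! u)" using H[OF Suc.hyps(1) uN] by simp
      hence "sl (s ! u) \<le> sl (s ! (u - 1))" using Rsl by blast
      hence sl1: "sl (s ! u) < d" using IH by simp
      hence "m (s ! u) < 0" using msl(2) atoms[OF uN] by simp
      moreover have "m (St (Suc u)) = m (St u) + m (s ! u)"
        using St_Suc[OF uN] madd St_fin atoms[OF uN] atom_fin by simp
      ultimately show ?case using IH sl1 by simp
    qed
    have "m (St N) < 0" using claim[of N] ls by (simp add: N_def)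
    thus False using St_N mU by simp
  qed
qed


lemma coeff_X: "coeff (of_int c * tt ^ m) i = (if m = i then c else 0)"
proof -
  have "tt ^ m = monom 1 m" by (simp add: tt_def monom_altdef)
  moreover have "(of_int c :: int poly) = monom c 0" by (simp add: of_int_monom)
  ultimately have "of_int c * tt ^ m = monom c m" by (simp add: mult_monom)
  thus ?thesis by (simp add: coeff_monom)
qed

definition rk :: "(nat \<Rightarrow> real) \<Rightarrow> nat set \<Rightarrow> nat \<Rightarrow> nat" where
  "rk lam U i = card {j \<in> U. (- lam j, j) < (- lam i, i)}"

lemma rk_mono:
  assumes "finite U" "i \<in> U" "j \<in> U" "(- lam i, i) < (- lam j, j)"
  shows "rk lam U i < rk lam U j"
proof -
  have "{k \<in> U. (- lam k, k) < (- lam i, i)} \<subset> {k \<in> U. (- lam k, k) < (- lam j, j)}"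
  proof
    show "{k \<in> U. (- lam k, k) < (- lam i, i)} \<subseteq> {k \<in> U. (- lam k, k) < (- lam j, j)}"
      using assms(4) less_trans by blast
    have "i \<in> {k \<in> U. (- lam k, k) < (- lam j, j)}" using assms by simp
    moreover have "i \<notin> {k \<in> U. (- lam k, k) < (- lam i, i)}" by simp
    ultimately show "{k \<in> U. (- lam k, k) < (- lam i, i)} \<noteq> {k \<in> U. (- lam k, k) < (- lam j, j)}" by blast
  qed
  thus ?thesis unfolding rk_def using assms(1) by (intro psubset_card_mono) auto
qed

lemma rk_inj: "finite U \<Longrightarrow> inj_on (rk lam U) U"
proof (rule inj_onI)
  fix i j assume f: "finite U" and ij: "i \<in> U" "j \<in> U" "rk lam U i = rk lam U j"
  show "i = j"
  proof (rule ccontr)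
    assume "i \<noteq> j"
    hence "(- lam i, i) \<noteq> (- lam j, j)" by simp
    hence "(- lam i, i) < (- lam j, j) \<or> (- lam j, j) < (- lam i, i)" by (simp only: neq_iff)
    thus False
    proof
      assume "(- lam i, i) < (- lam j, j)"
      hence "rk lam U i < rk lam U j" by (rule rk_mono[OF f ij(1,2)])
      thus False using ij(3) by simp
    next
      assume "(- lam j, j) < (- lam i, i)"
      hence "rk lam U j < rk lam U i" by (rule rk_mono[OF f ij(2,1)])
      thus False using ij(3) by simp
    qed
  qed
qed

lemma rk_lt: "finite U \<Longrightarrow> i \<in> U \<Longrightarrow> rk lam U i < card U"
proof -
  assume f: "finite U" and i: "i \<in> U"
  have "{j \<in> U. (- lam j, j) < (- lam i, i)} \<subset> U" using i by auto
  thus ?thesis unfolding rk_def using f by (rule psubset_card_mono[rotated])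
qed

lemma card2_minmax: "finite (X::nat set) \<Longrightarrow> card X = 2 \<Longrightarrow> X = {Min X, Max X}"
proof -
  assume "finite X" "card X = 2"
  then obtain x y where "X = {x, y}" "x \<noteq> y" by (auto simp: card_2_iff)
  thus ?thesis by (cases "x < y") (auto simp: min_def max_def)
qed

lemma keyD_inj:
  assumes inj: "inj_on r U" and rM: "\<forall>i\<in>U. r i < M"
  shows "inj_on (keyD r M) {A. atom A \<and> A \<subseteq> U}"
proof (rule inj_onI)
  fix A B assume A: "A \<in> {A. atom A \<and> A \<subseteq> U}" and B: "B \<in> {A. atom A \<and> A \<subseteq> U}"
    and e: "keyD r M A = keyD r M B"
  have fA: "finite A" "A \<noteq> {}" "A \<subseteq> U" using A atom_fin atom_ne by auto
  have fB: "finite B" "B \<noteq> {}" "B \<subseteq> U" using B atom_fin atom_ne by auto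
  have injA: "inj_on r A" "inj_on r B" using inj fA fB inj_on_subset by blast+
  have cA: "card (r ` A) = card A" "card (r ` B) = card B" using injA by (auto simp: card_image)
  have minA: "Min (r ` A) < M" if "card A = 2"
  proof -
    have "Min (r ` A) \<in> r ` A" using fA by simp
    then obtain a where a: "a \<in> A" "Min (r ` A) = r a" by auto
    have "a \<in> U" using a fA by auto
    thus ?thesis using rM a by auto
  qed
  have minB: "Min (r ` B) < M" if "card B = 2"
  proof -
    have "Min (r ` B) \<in> r ` B" using fB by simp
    then obtain a where a: "a \<in> B" "Min (r ` B) = r a" by auto
    have "a \<in> U" using a fB by auto
    thus ?thesis using rM a by auto
  qed
  have cards: "card A = card B"
  proof -
    have "card A = 1 \<or> card A = 2" "card B = 1 \<or> card B = 2" using A B by (auto simp: atom_def)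
    thus ?thesis using e minA minB by (auto simp: keyD_def)
  qed
  have img: "r ` A = r ` B"
  proof (cases "card A = 1")
    case True
    hence "card (r ` A) = 1" "card (r ` B) = 1" using cA cards by auto
    then obtain a b where ab: "r ` A = {a}" "r ` B = {b}" by (auto simp: card_Suc_eq)
    thus ?thesis using e by (simp add: keyD_def)
  next
    case False
    hence c2: "card A = 2" "card B = 2" using A cards by (auto simp: atom_def)
    hence "card (r ` A) = 2" "card (r ` B) = 2" using cA by auto
    hence "r ` A = {Min (r ` A), Max (r ` A)}" "r ` B = {Min (r ` B), Max (r ` B)}"
      using card2_minmax fA fB by auto
    moreover have "Max (r ` A) = Max (r ` B)" "Min (r ` A) = Min (r ` B)" using e c2 by (auto simp: keyD_def)
    ultimately show ?thesis by simp
  qed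
  show "A = B" using img inj fA fB by (simp add: inj_on_image_eq_iff)
qed

definition keyP :: "(nat \<Rightarrow> real) \<Rightarrow> nat set \<Rightarrow> nat set \<Rightarrow> real \<times> (nat \<times> nat)" where
  "keyP lam U A = (- (sJ lam A / real (card A)), keyD (rk lam U) (card U) A)"

lemma keyP_inj: "finite U \<Longrightarrow> inj_on (keyP lam U) {A. atom A \<and> A \<subseteq> U}"
proof -
  assume f: "finite U"
  have "inj_on (keyD (rk lam U) (card U)) {A. atom A \<and> A \<subseteq> U}"
    using keyD_inj[OF rk_inj[OF f]] rk_lt[OF f] by blast
  thus ?thesis unfolding inj_on_def keyP_def by auto
qed

lemma keyP_sing:
  assumes f: "finite U" and A: "atom A" "A \<subseteq> U" "card A = 1" and B: "atom B" "B \<subseteq> U" "card B = 1"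
  shows "keyD (rk lam U) (card U) A < keyD (rk lam U) (card U) B \<longleftrightarrow> keyP lam U A < keyP lam U B"
proof -
  obtain a where a: "A = {a}" using A by (auto simp: card_Suc_eq)
  obtain b where b: "B = {b}" using B by (auto simp: card_Suc_eq)
  have aU: "a \<in> U" "b \<in> U" using A B a b by auto
  have kd: "keyD (rk lam U) (card U) A < keyD (rk lam U) (card U) B \<longleftrightarrow> rk lam U a < rk lam U b"
    using a b by (simp add: keyD_def)
  have kp: "keyP lam U A < keyP lam U B \<longleftrightarrow> (- lam a < - lam b \<or> (- lam a \<le> - lam b \<and> rk lam U a < rk lam U b))"
    using a b by (simp add: keyP_def keyD_def sJ_def)
  show ?thesis
  proof (cases "lam a = lam b")
    case True thus ?thesis using kd kp by simp
  next
    case False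
    show ?thesis
    proof (cases "lam a > lam b")
      case True
      hence "(- lam a, a) < (- lam b, b)" by simp
      hence "rk lam U a < rk lam U b" using rk_mono[OF f aU] by blast
      thus ?thesis using kd kp True by simp
    next
      case False
      hence "lam a < lam b" using \<open>lam a \<noteq> lam b\<close> by simp
      hence "(- lam b, b) < (- lam a, a)" by simp
      hence "rk lam U b < rk lam U a" using rk_mono[OF f aU(2,1)] by blast
      thus ?thesis using kd kp \<open>lam a < lam b\<close> by simp
    qed
  qed
qed

lemma expand_P:
  assumes f: "finite U" and I: "I \<subseteq> U"
  shows "aK (card I) = (\<Sum>g\<in>SAP (keyP lam U) I. wtl (rk lam U) g * of_int (epsl g))"
proof -
  have "aK (card I) = (\<Sum>g\<in>SAP (keyD (rk lam U) (card U)) I. wtl (rk lam U) g * of_int (epsl g))"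
    by (rule expand_D[OF f rk_inj[OF f] I])
  also have "\<dots> = (\<Sum>g\<in>SAP (keyP lam U) I. wtl (rk lam U) g * of_int (epsl g))"
  proof (rule SAP_key_change)
    have s: "{A. atom A \<and> A \<subseteq> I} \<subseteq> {A. atom A \<and> A \<subseteq> U}" using I by auto
    show "inj_on (keyD (rk lam U) (card U)) {A. atom A \<and> A \<subseteq> I}"
      using keyD_inj[OF rk_inj[OF f]] rk_lt[OF f] inj_on_subset[OF _ s] by blast
    show "inj_on (keyP lam U) {A. atom A \<and> A \<subseteq> I}"
      using keyP_inj[OF f] inj_on_subset[OF _ s] by blast
    fix A B assume "atom A" "atom B" "A \<subseteq> I" "B \<subseteq> I" "card A = 1" "card B = 1"
    thus "keyD (rk lam U) (card U) A < keyD (rk lam U) (card U) B \<longleftrightarrow> keyP lam U A < keyP lam U B"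
      using keyP_sing[OF f] I by blast
  qed
  finally show ?thesis .
qed


lemma even_nn1: "even ((c::nat) * (c - 1))"
  by (cases "even c") (auto simp: even_mult_iff)

lemma prod_aK: "prod_list (map (\<lambda>I. aK (card I)) P) =
   (-1) ^ ((\<Sum>I\<leftarrow>P. card I * (card I - 1)) div 2) * tt ^ odd_blocks P"
proof (induction P)
  case Nil thus ?case by (simp add: odd_blocks_def)
next
  case (Cons I P)
  have d: "(card I * (card I - 1) + (\<Sum>I\<leftarrow>P. card I * (card I - 1))) div 2 =
      card I * (card I - 1) div 2 + (\<Sum>I\<leftarrow>P. card I * (card I - 1)) div 2"
    using even_nn1[of "card I"] by (simp add: div_plus_div_distrib_dvd_left)
  have o: "odd_blocks (I # P) = (if odd (card I) then 1 else 0) + odd_blocks P"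
    by (simp add: odd_blocks_def)
  show ?case using Cons d o by (simp add: aK_def cK_def power_add algebra_simps)
qed

lemma Pord_Qs: "Pord n lam = Qs {1..n} lam {}"
proof (intro set_eqI iffI)
  fix P assume P: "P \<in> Pord n lam"
  have p: "\<forall>I\<in>set P. I \<noteq> {}" "dlist P" "\<Union>(set P) = {1..n}"
    "\<forall>i\<in>{1..length P}. sum_list (map (sJ lam) (take i P)) > 0"
    using P by (auto simp: Pord_def ord_partitions_def dlist_def)
  have fin: "\<forall>A\<in>set P. finite A" using p(3) by (metis Sup_upper finite_atLeastAtMost finite_subset)
  have "sJ lam (\<Union>(set (take i P))) = sum_list (map (sJ lam) (take i P))" for i
    using sJ_Union_dlist[OF dlist_take[OF p(2)]] fin by (meson in_set_takeD)
  thus "P \<in> Qs {1..n} lam {}" using p by (simp add: Qs_def)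
next
  fix P assume P: "P \<in> Qs {1..n} lam {}"
  have p: "\<forall>I\<in>set P. I \<noteq> {}" "dlist P" "\<Union>(set P) = {1..n}"
    "\<forall>i\<in>{1..length P}. sJ lam (\<Union>(set (take i P))) > 0" using P by (auto simp: Qs_def)
  have fin: "\<forall>A\<in>set P. finite A" using p(3) by (metis Sup_upper finite_atLeastAtMost finite_subset)
  have "sJ lam (\<Union>(set (take i P))) = sum_list (map (sJ lam) (take i P))" for i
    using sJ_Union_dlist[OF dlist_take[OF p(2)]] fin by (meson in_set_takeD)
  thus "P \<in> Pord n lam" using p by (simp add: Pord_def ord_partitions_def dlist_def)
qed

theorem mainTheorem10:
  fixes n k :: nat and lam :: "nat \<Rightarrow> real"
  assumes "n \<ge> 3"
    and "sJ lam {1..n} > 0"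
    and "Nlam n lam = n"
    and "k \<ge> 1"
  shows "(\<Sum>P\<in>Pord_k n lam k. (-1) ^ length P * eps P * eps' P) = (0::int)"
proof -
  let ?U = "{1..n}"
  have fU: "finite ?U" by simp
  have cU: "card ?U = n" by simp
  note gen = generic[OF assms(2,3)]
  define R where "R = (\<lambda>A B. keyP lam ?U A < keyP lam ?U B)"
  define pos where "pos = (\<lambda>S. sJ lam S > (0::real))"
  have trR: "transp R" unfolding R_def transp_def by (auto intro: less_trans)
  have main: "(\<Sum>P\<in>Qs ?U lam {}. of_int ((-1) ^ length P * epsl P) * prod_list (map (\<lambda>I. aK (card I)) P))
        = (\<Sum>s\<in>AL (?U - {}). wtl (rk lam ?U) s * of_int (epsl s * cf R pos {} s))"
    unfolding R_def pos_def by (rule main_rec[OF fU expand_P[OF fU]]) auto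
  have cf0: "cf R pos {} s = 0" if s: "s \<in> AL ?U" for s
  proof -
    have sp: "\<forall>A\<in>set s. atom A" "dlist s" "\<Union>(set s) = ?U" using s by (auto simp: AL_def)
    have "n = card (\<Union>(set s))" using sp cU by simp
    also have "\<dots> = sum_list (map card s)" using card_Union_dlist[OF sp(2)] sp(1) atom_fin by blast
    also have "\<dots> \<le> sum_list (map (\<lambda>_. 2) s)"
      by (rule sum_list_mono) (use sp(1) in \<open>auto simp: atom_def\<close>)
    also have "\<dots> = 2 * length s" by (simp add: sum_list_triv)
    finally have ls: "length s \<ge> 2" using assms(1) by simp
    have "\<exists>w. bad R pos {} s w"
      unfolding R_def pos_def
    proof (rule bad_exists[OF _ assms(2) gen _ keyP_inj[OF fU] s ls])
      show "1 \<le> n" using assms(1) by simp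
      show "\<And>A. fst (keyP lam ?U A) = - (sJ lam A / real (card A))" by (simp add: keyP_def)
    qed
    then obtain w where "bad R pos {} s w" by blast
    thus ?thesis by (rule cf_zero[OF trR])
  qed
  have Z: "(\<Sum>P\<in>Pord n lam. of_int ((-1) ^ length P * eps P * eps' P) * tt ^ odd_blocks P) = (0 :: int poly)"
  proof -
    have "(\<Sum>P\<in>Pord n lam. of_int ((-1) ^ length P * eps P * eps' P) * tt ^ odd_blocks P) =
        (\<Sum>P\<in>Qs ?U lam {}. of_int ((-1) ^ length P * epsl P) * prod_list (map (\<lambda>I. aK (card I)) P))"
      unfolding Pord_Qs[symmetric]
    proof (rule sum.cong[OF refl])
      fix P assume P: "P \<in> Pord n lam"
      have "P \<in> ord_partitions n" using P by (simp add: Pord_def)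
      hence e: "eps P = epsl P" by (rule eps_epsl)
      show "of_int ((-1) ^ length P * eps P * eps' P) * tt ^ odd_blocks P =
          of_int ((-1) ^ length P * epsl P) * prod_list (map (\<lambda>I. aK (card I)) P)"
        unfolding prod_aK e by (simp add: eps'_def)
    qed
    also have "\<dots> = 0" using main cf0 by simp
    finally show ?thesis .
  qed
  have fP: "finite (Pord n lam)" using finite_Qs[OF fU] by (simp add: Pord_Qs)
  let ?w = "\<lambda>P. (-1) ^ length P * eps P * eps' P"
  have "(\<Sum>P\<in>Pord_k n lam k. ?w P) = (\<Sum>P\<in>Pord n lam. if odd_blocks P = 2 * k \<or> odd_blocks P = 2 * k + 1 then ?w P else 0)"
    unfolding Pord_k_def by (simp only: sum.inter_filter[OF fP])
  also have "\<dots> = (\<Sum>P\<in>Pord n lam. coeff (of_int (?w P) * tt ^ odd_blocks P) (2 * k) +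
                                   coeff (of_int (?w P) * tt ^ odd_blocks P) (2 * k + 1))"
    by (intro sum.cong refl) (simp only: coeff_X, auto)
  also have "\<dots> = coeff (\<Sum>P\<in>Pord n lam. of_int (?w P) * tt ^ odd_blocks P) (2 * k) +
                  coeff (\<Sum>P\<in>Pord n lam. of_int (?w P) * tt ^ odd_blocks P) (2 * k + 1)"
    by (simp add: coeff_sum sum.distrib)
  also have "\<dots> = 0" using Z by simp
  finally show ?thesis .
qed


end
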